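(* Let $\mathcal{C}$ be a skeletally small triangulated category and $H$ a $\mathbb{Q}$-subspace of $G(\mathcal{C})_{\mathbb{Q}}$. Then there exists a dense subcategory $\mathcal{D}$ of $\mathcal{C}$ such that the image of the (injective) natural map $G(\mathcal{D})_{\mathbb{Q}}\to G(\mathcal{C})_{\mathbb{Q}}$ equals $H$.
   Context: $G(\mathcal{C})$ is the Grothendieck group of the triangulated category $\mathcal{C}$ (free abelian group on isomorphism classes modulo $[V]=[U]+[W]$ for exact triangles $U\to V\to W\to U[1]$); $H_{\mathbb{Q}}=H\otimes_{\mathbb{Z}}\mathbb{Q}$. A dense subcategory is a triangulated subcategory $\mathcal{D}$ (full, closed under $[\pm1]$, isomorphisms and cones) such that for every $U\in\mathcal{C}$ there is $V$ with $U\oplus V\in\mathcal{D}$. *)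

theory Defs
  imports Complex_Main
begin

record ('o, 'm) tcat =
  Ob    :: "'o set"
  Hom   :: "'o \<Rightarrow> 'o \<Rightarrow> 'm set"
  comp  :: "'m \<Rightarrow> 'm \<Rightarrow> 'm"          (* comp g f = g o f *)
  idm   :: "'o \<Rightarrow> 'm"
  madd  :: "'m \<Rightarrow> 'm \<Rightarrow> 'm"
  mneg  :: "'m \<Rightarrow> 'm"
  mzero :: "'o \<Rightarrow> 'o \<Rightarrow> 'm"
  ShO   :: "'o \<Rightarrow> 'o"
  ShM   :: "'m \<Rightarrow> 'm"
  Tri   :: "('o \<times> 'o \<times> 'o \<times> 'm \<times> 'm \<times> 'm) set"

definition category :: "('o, 'm, 'x) tcat_scheme \<Rightarrow> bool" where
  "category C \<longleftrightarrow>
     (\<forall>a b f. f \<in> Hom C a b \<longrightarrow> a \<in> Ob C \<and> b \<in> Ob C) \<and>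
     (\<forall>a b a' b' f. f \<in> Hom C a b \<longrightarrow> f \<in> Hom C a' b' \<longrightarrow> a = a' \<and> b = b') \<and>
     (\<forall>a \<in> Ob C. idm C a \<in> Hom C a a) \<and>
     (\<forall>a b c f g. f \<in> Hom C a b \<longrightarrow> g \<in> Hom C b c \<longrightarrow> comp C g f \<in> Hom C a c) \<and>
     (\<forall>a b c d f g h. f \<in> Hom C a b \<longrightarrow> g \<in> Hom C b c \<longrightarrow> h \<in> Hom C c d \<longrightarrow>
         comp C h (comp C g f) = comp C (comp C h g) f) \<and>
     (\<forall>a b f. f \<in> Hom C a b \<longrightarrow> comp C f (idm C a) = f \<and> comp C (idm C b) f = f)"

definition preadditive :: "('o, 'm, 'x) tcat_scheme \<Rightarrow> bool" where
  "preadditive C \<longleftrightarrow>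
     (\<forall>a \<in> Ob C. \<forall>b \<in> Ob C.
        mzero C a b \<in> Hom C a b \<and>
        (\<forall>f \<in> Hom C a b. \<forall>g \<in> Hom C a b. madd C f g \<in> Hom C a b \<and> madd C f g = madd C g f) \<and>
        (\<forall>f \<in> Hom C a b. \<forall>g \<in> Hom C a b. \<forall>h \<in> Hom C a b.
            madd C (madd C f g) h = madd C f (madd C g h)) \<and>
        (\<forall>f \<in> Hom C a b. madd C f (mzero C a b) = f \<and> mneg C f \<in> Hom C a b \<and>
            madd C f (mneg C f) = mzero C a b)) \<and>
     (\<forall>a b c f f' g. f \<in> Hom C a b \<longrightarrow> f' \<in> Hom C a b \<longrightarrow> g \<in> Hom C b c \<longrightarrow>
         comp C g (madd C f f') = madd C (comp C g f) (comp C g f')) \<and>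
     (\<forall>a b c f g g'. f \<in> Hom C a b \<longrightarrow> g \<in> Hom C b c \<longrightarrow> g' \<in> Hom C b c \<longrightarrow>
         comp C (madd C g g') f = madd C (comp C g f) (comp C g' f))"

definition is_iso :: "('o, 'm, 'x) tcat_scheme \<Rightarrow> 'm \<Rightarrow> 'o \<Rightarrow> 'o \<Rightarrow> bool" where
  "is_iso C f a b \<longleftrightarrow> f \<in> Hom C a b \<and>
     (\<exists>g \<in> Hom C b a. comp C g f = idm C a \<and> comp C f g = idm C b)"

definition isomorphic :: "('o, 'm, 'x) tcat_scheme \<Rightarrow> 'o \<Rightarrow> 'o \<Rightarrow> bool" where
  "isomorphic C a b \<longleftrightarrow> (\<exists>f. is_iso C f a b)"

definition zero_object :: "('o, 'm, 'x) tcat_scheme \<Rightarrow> 'o \<Rightarrow> bool" where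
  "zero_object C z \<longleftrightarrow> z \<in> Ob C \<and>
     (\<forall>a \<in> Ob C. (\<exists>!f. f \<in> Hom C z a) \<and> (\<exists>!f. f \<in> Hom C a z))"

definition is_biproduct :: "('o, 'm, 'x) tcat_scheme \<Rightarrow> 'o \<Rightarrow> 'o \<Rightarrow> 'o \<Rightarrow> bool" where
  "is_biproduct C a b s \<longleftrightarrow> a \<in> Ob C \<and> b \<in> Ob C \<and> s \<in> Ob C \<and>
     (\<exists>i1 \<in> Hom C a s. \<exists>i2 \<in> Hom C b s. \<exists>p1 \<in> Hom C s a. \<exists>p2 \<in> Hom C s b.
        comp C p1 i1 = idm C a \<and> comp C p2 i2 = idm C b \<and>
        comp C p2 i1 = mzero C a b \<and> comp C p1 i2 = mzero C b a \<and>
        madd C (comp C i1 p1) (comp C i2 p2) = idm C s)"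

definition additive :: "('o, 'm, 'x) tcat_scheme \<Rightarrow> bool" where
  "additive C \<longleftrightarrow> category C \<and> preadditive C \<and> (\<exists>z. zero_object C z) \<and>
     (\<forall>a \<in> Ob C. \<forall>b \<in> Ob C. \<exists>s. is_biproduct C a b s)"

definition shift_ok :: "('o, 'm, 'x) tcat_scheme \<Rightarrow> bool" where
  "shift_ok C \<longleftrightarrow>
     (\<forall>a \<in> Ob C. ShO C a \<in> Ob C \<and> ShM C (idm C a) = idm C (ShO C a)) \<and>
     (\<forall>a b f. f \<in> Hom C a b \<longrightarrow> ShM C f \<in> Hom C (ShO C a) (ShO C b)) \<and>
     (\<forall>a b c f g. f \<in> Hom C a b \<longrightarrow> g \<in> Hom C b c \<longrightarrow>
         ShM C (comp C g f) = comp C (ShM C g) (ShM C f)) \<and>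
     (\<forall>a b f g. f \<in> Hom C a b \<longrightarrow> g \<in> Hom C a b \<longrightarrow>
         ShM C (madd C f g) = madd C (ShM C f) (ShM C g)) \<and>
     (\<forall>a \<in> Ob C. \<forall>b \<in> Ob C. bij_betw (ShM C) (Hom C a b) (Hom C (ShO C a) (ShO C b))) \<and>
     (\<forall>b \<in> Ob C. \<exists>a \<in> Ob C. isomorphic C (ShO C a) b)"

definition is_triangle :: "('o, 'm, 'x) tcat_scheme \<Rightarrow> 'o \<times> 'o \<times> 'o \<times> 'm \<times> 'm \<times> 'm \<Rightarrow> bool" where
  "is_triangle C T \<longleftrightarrow> (case T of (X, Y, Z, f, g, h) \<Rightarrow>
      f \<in> Hom C X Y \<and> g \<in> Hom C Y Z \<and> h \<in> Hom C Z (ShO C X))"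

definition tri_morph :: "('o, 'm, 'x) tcat_scheme \<Rightarrow> 'o \<times> 'o \<times> 'o \<times> 'm \<times> 'm \<times> 'm \<Rightarrow>
     'o \<times> 'o \<times> 'o \<times> 'm \<times> 'm \<times> 'm \<Rightarrow> 'm \<Rightarrow> 'm \<Rightarrow> 'm \<Rightarrow> bool" where
  "tri_morph C T T' u v w \<longleftrightarrow> (case T of (X, Y, Z, f, g, h) \<Rightarrow> case T' of (X', Y', Z', f', g', h') \<Rightarrow>
      u \<in> Hom C X X' \<and> v \<in> Hom C Y Y' \<and> w \<in> Hom C Z Z' \<and>
      comp C v f = comp C f' u \<and> comp C w g = comp C g' v \<and>
      comp C (ShM C u) h = comp C h' w)"

definition tri_iso :: "('o, 'm, 'x) tcat_scheme \<Rightarrow> 'o \<times> 'o \<times> 'o \<times> 'm \<times> 'm \<times> 'm \<Rightarrow>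
     'o \<times> 'o \<times> 'o \<times> 'm \<times> 'm \<times> 'm \<Rightarrow> bool" where
  "tri_iso C T T' \<longleftrightarrow> (case T of (X, Y, Z, f, g, h) \<Rightarrow> case T' of (X', Y', Z', f', g', h') \<Rightarrow>
      (\<exists>u v w. tri_morph C T T' u v w \<and> is_iso C u X X' \<and> is_iso C v Y Y' \<and> is_iso C w Z Z'))"

text \<open>Triangulated category: axioms TR1--TR4 (TR4 = octahedral axiom, Stacks 05QK).\<close>
definition triangulated :: "('o, 'm, 'x) tcat_scheme \<Rightarrow> bool" where
  "triangulated C \<longleftrightarrow> additive C \<and> shift_ok C \<and>
     (\<forall>T \<in> Tri C. is_triangle C T) \<and>
     \<comment> \<open>TR1\<close>
     (\<forall>T T'. T \<in> Tri C \<longrightarrow> is_triangle C T' \<longrightarrow> tri_iso C T T' \<longrightarrow> T' \<in> Tri C) \<and>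
     (\<forall>X \<in> Ob C. \<forall>Z. zero_object C Z \<longrightarrow>
         (X, X, Z, idm C X, mzero C X Z, mzero C Z (ShO C X)) \<in> Tri C) \<and>
     (\<forall>X Y f. f \<in> Hom C X Y \<longrightarrow> (\<exists>Z g h. (X, Y, Z, f, g, h) \<in> Tri C)) \<and>
     \<comment> \<open>TR2\<close>
     (\<forall>X Y Z f g h. is_triangle C (X, Y, Z, f, g, h) \<longrightarrow>
        ((X, Y, Z, f, g, h) \<in> Tri C \<longleftrightarrow> (Y, Z, ShO C X, g, h, mneg C (ShM C f)) \<in> Tri C)) \<and>
     \<comment> \<open>TR3\<close>
     (\<forall>X Y Z f g h X' Y' Z' f' g' h' u v.
        (X, Y, Z, f, g, h) \<in> Tri C \<longrightarrow> (X', Y', Z', f', g', h') \<in> Tri C \<longrightarrow>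
        u \<in> Hom C X X' \<longrightarrow> v \<in> Hom C Y Y' \<longrightarrow> comp C v f = comp C f' u \<longrightarrow>
        (\<exists>w. tri_morph C (X, Y, Z, f, g, h) (X', Y', Z', f', g', h') u v w)) \<and>
     \<comment> \<open>TR4\<close>
     (\<forall>X Y Z f g Q1 p1 d1 Q2 p2 d2 Q3 p3 d3.
        f \<in> Hom C X Y \<longrightarrow> g \<in> Hom C Y Z \<longrightarrow>
        (X, Y, Q1, f, p1, d1) \<in> Tri C \<longrightarrow>
        (X, Z, Q2, comp C g f, p2, d2) \<in> Tri C \<longrightarrow>
        (Y, Z, Q3, g, p3, d3) \<in> Tri C \<longrightarrow>
        (\<exists>a b. a \<in> Hom C Q1 Q2 \<and> b \<in> Hom C Q2 Q3 \<and>
           (Q1, Q2, Q3, a, b, comp C (ShM C p1) d3) \<in> Tri C \<and>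
           comp C a p1 = comp C p2 g \<and> comp C d2 a = d1 \<and>
           comp C b p2 = p3 \<and> comp C d3 b = comp C (ShM C f) d2))"

definition triangulated_subcategory :: "('o, 'm, 'x) tcat_scheme \<Rightarrow> 'o set \<Rightarrow> bool" where
  "triangulated_subcategory C D \<longleftrightarrow> D \<subseteq> Ob C \<and> D \<noteq> {} \<and>
     (\<forall>X \<in> D. \<forall>Y. isomorphic C X Y \<longrightarrow> Y \<in> D) \<and>
     (\<forall>X \<in> D. ShO C X \<in> D) \<and>
     (\<forall>X \<in> Ob C. ShO C X \<in> D \<longrightarrow> X \<in> D) \<and>
     (\<forall>X Y Z f g h. (X, Y, Z, f, g, h) \<in> Tri C \<longrightarrow> X \<in> D \<longrightarrow> Y \<in> D \<longrightarrow> Z \<in> D)"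

definition dense_subcategory :: "('o, 'm, 'x) tcat_scheme \<Rightarrow> 'o set \<Rightarrow> bool" where
  "dense_subcategory C D \<longleftrightarrow> triangulated_subcategory C D \<and>
     (\<forall>U \<in> Ob C. \<exists>V \<in> Ob C. \<exists>S. is_biproduct C U V S \<and> S \<in> D)"

text \<open>G(S) \<otimes> Q is presented as the Q-vector space of finitely supported functions
  S \<rightarrow> Q (free Q-vector space on objects) modulo the span of the relations
  [X] - [X'] for isomorphic X, X' and [Y] - [X] - [Z] for exact triangles in S.
  Elements are cosets (sets of representatives).\<close>

definition fsupp :: "'o set \<Rightarrow> ('o \<Rightarrow> rat) set" where
  "fsupp S = {v. finite {x. v x \<noteq> 0} \<and> {x. v x \<noteq> 0} \<subseteq> S}"

definition delta :: "'o \<Rightarrow> 'o \<Rightarrow> rat" where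
  "delta x = (\<lambda>y. if y = x then 1 else 0)"

definition qspan :: "('o \<Rightarrow> rat) set \<Rightarrow> ('o \<Rightarrow> rat) set" where
  "qspan A = {v. \<exists>B c. finite B \<and> B \<subseteq> A \<and> v = (\<lambda>y. \<Sum>b\<in>B. c b * b y)}"

definition groth_rels :: "('o, 'm, 'x) tcat_scheme \<Rightarrow> 'o set \<Rightarrow> ('o \<Rightarrow> rat) set" where
  "groth_rels C S =
     {(\<lambda>y. delta Y y - delta X y - delta Z y) | X Y Z f g h.
         (X, Y, Z, f, g, h) \<in> Tri C \<and> X \<in> S \<and> Y \<in> S \<and> Z \<in> S} \<union>
     {(\<lambda>y. delta X y - delta X' y) | X X'. X \<in> S \<and> X' \<in> S \<and> isomorphic C X X'}"

definition groth_coset :: "('o, 'm, 'x) tcat_scheme \<Rightarrow> 'o set \<Rightarrow> ('o \<Rightarrow> rat) \<Rightarrow> ('o \<Rightarrow> rat) set" where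
  "groth_coset C S v = {w \<in> fsupp S. (\<lambda>y. w y - v y) \<in> qspan (groth_rels C S)}"

definition GQ :: "('o, 'm, 'x) tcat_scheme \<Rightarrow> 'o set \<Rightarrow> ('o \<Rightarrow> rat) set set" where
  "GQ C S = groth_coset C S ` fsupp S"

definition gq_add :: "('o, 'm, 'x) tcat_scheme \<Rightarrow> 'o set \<Rightarrow> ('o \<Rightarrow> rat) set \<Rightarrow> ('o \<Rightarrow> rat) set \<Rightarrow> ('o \<Rightarrow> rat) set" where
  "gq_add C S K L = groth_coset C S (\<lambda>y. (SOME v. v \<in> K) y + (SOME w. w \<in> L) y)"

definition gq_smult :: "('o, 'm, 'x) tcat_scheme \<Rightarrow> 'o set \<Rightarrow> rat \<Rightarrow> ('o \<Rightarrow> rat) set \<Rightarrow> ('o \<Rightarrow> rat) set" where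
  "gq_smult C S c K = groth_coset C S (\<lambda>y. c * (SOME v. v \<in> K) y)"

definition gq_subspace :: "('o, 'm, 'x) tcat_scheme \<Rightarrow> 'o set \<Rightarrow> ('o \<Rightarrow> rat) set set \<Rightarrow> bool" where
  "gq_subspace C S H \<longleftrightarrow> H \<subseteq> GQ C S \<and> groth_coset C S (\<lambda>y. 0) \<in> H \<and>
     (\<forall>K \<in> H. \<forall>L \<in> H. gq_add C S K L \<in> H) \<and>
     (\<forall>c. \<forall>K \<in> H. gq_smult C S c K \<in> H)"

definition gq_incl :: "('o, 'm, 'x) tcat_scheme \<Rightarrow> 'o set \<Rightarrow> ('o \<Rightarrow> rat) set \<Rightarrow> ('o \<Rightarrow> rat) set" where
  "gq_incl C D K = groth_coset C (Ob C) (SOME v. v \<in> K)"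

end

theory Submission
  imports Defs "HOL-Library.Function_Algebras"
begin

definition sc :: "rat \<Rightarrow> ('o \<Rightarrow> rat) \<Rightarrow> ('o \<Rightarrow> rat)" where
  "sc c f = (\<lambda>y. c * f y)"

interpretation qm: module sc
  by standard (auto simp: sc_def algebra_simps)

lemma sum_fun_app: "(sum f t) y = (\<Sum>a\<in>t. f a y)"
  by (induct t rule: infinite_finite_induct) auto

lemma qspan_eq: "qspan A = qm.span A"
  unfolding qspan_def qm.span_explicit
  by (auto simp: sum_fun_app sc_def fun_eq_iff)

lemma qs_zero: "(\<lambda>y. 0) \<in> qspan A"
  using qm.span_zero[of A] by (simp add: qspan_eq zero_fun_def)
lemma qs_base: "a \<in> A \<Longrightarrow> a \<in> qspan A"
  by (simp add: qspan_eq qm.span_base)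
lemma qs_mono: "A \<subseteq> B \<Longrightarrow> qspan A \<subseteq> qspan B"
  by (simp add: qspan_eq qm.span_mono)
lemma qs_add: "u \<in> qspan A \<Longrightarrow> v \<in> qspan A \<Longrightarrow> (\<lambda>y. u y + v y) \<in> qspan A"
  using qm.span_add[of u A v] by (simp add: qspan_eq plus_fun_def)
lemma qs_smult: "u \<in> qspan A \<Longrightarrow> (\<lambda>y. c * u y) \<in> qspan A"
  using qm.span_scale[of u A c] by (simp add: qspan_eq sc_def)
lemma qs_diff: "u \<in> qspan A \<Longrightarrow> v \<in> qspan A \<Longrightarrow> (\<lambda>y. u y - v y) \<in> qspan A"
  using qm.span_diff[of u A v] by (simp add: qspan_eq fun_diff_def)
lemma qs_neg: "u \<in> qspan A \<Longrightarrow> (\<lambda>y. - u y) \<in> qspan A"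
  using qs_smult[of u A "-1"] by simp
lemma qs_span: "A \<subseteq> qspan B \<Longrightarrow> qspan A \<subseteq> qspan B"
  by (simp add: qspan_eq qm.span_minimal qm.subspace_span)
lemma qs_Un: "v \<in> qspan (A \<union> B) \<Longrightarrow> \<exists>a b. a \<in> qspan A \<and> b \<in> qspan B \<and> v = (\<lambda>y. a y + b y)"
  unfolding qspan_eq qm.span_Un by (auto simp: plus_fun_def)
lemma qs_sum: "(\<And>x. x \<in> F \<Longrightarrow> f x \<in> qspan A) \<Longrightarrow> (\<lambda>y. \<Sum>x\<in>F. f x y) \<in> qspan A"
  using qm.span_sum[of F f A] by (simp add: qspan_eq sum_fun_app[symmetric] fun_eq_iff)
lemma qs_induct[consumes 1, case_names base step]:
  assumes "v \<in> qspan A" "P (\<lambda>y. 0)"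
    "\<And>c a u. a \<in> A \<Longrightarrow> P u \<Longrightarrow> P (\<lambda>y. c * a y + u y)"
  shows "P v"
  using assms(1) unfolding qspan_eq
proof (induct rule: qm.span_induct_alt)
  case base then show ?case using assms(2) by (simp add: zero_fun_def)
next
  case (step c x y) then show ?case using assms(3)[of x y c] by (simp add: sc_def plus_fun_def)
qed

locale tri =
  fixes C :: "('o, 'm) tcat"
  assumes T: "triangulated C"
begin

lemma additiveC: "additive C" using T unfolding triangulated_def by blast
lemma catC: "category C" using additiveC unfolding additive_def by blast
lemma preC: "preadditive C" using additiveC unfolding additive_def by blast
lemma shC: "shift_ok C" using T unfolding triangulated_def by blast

definition Arr :: "'m \<Rightarrow> bool" where "Arr f \<longleftrightarrow> (\<exists>a b. f \<in> Hom C a b)"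
definition dom :: "'m \<Rightarrow> 'o" where "dom f = (THE a. \<exists>b. f \<in> Hom C a b)"
definition cod :: "'m \<Rightarrow> 'o" where "cod f = (THE b. \<exists>a. f \<in> Hom C a b)"

lemma hom_uniq: "f \<in> Hom C a b \<Longrightarrow> f \<in> Hom C a' b' \<Longrightarrow> a = a' \<and> b = b'"
proof -
  have "\<forall>a b a' b' f. f \<in> Hom C a b \<longrightarrow> f \<in> Hom C a' b' \<longrightarrow> a = a' \<and> b = b'"
    using catC unfolding category_def by (elim conjE)
  then show "f \<in> Hom C a b \<Longrightarrow> f \<in> Hom C a' b' \<Longrightarrow> a = a' \<and> b = b'" by blast
qed

lemma hom_iff: "f \<in> Hom C a b \<longleftrightarrow> Arr f \<and> dom f = a \<and> cod f = b"
proof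
  assume f: "f \<in> Hom C a b"
  have d: "dom f = a" unfolding dom_def
    by (rule the_equality) (use f hom_uniq in blast)+
  have c: "cod f = b" unfolding cod_def
    by (rule the_equality) (use f hom_uniq in blast)+
  show "Arr f \<and> dom f = a \<and> cod f = b" using f d c Arr_def by blast
next
  assume "Arr f \<and> dom f = a \<and> cod f = b"
  then obtain a' b' where f: "f \<in> Hom C a' b'" and "dom f = a" "cod f = b" unfolding Arr_def by blast
  moreover have "dom f = a'" unfolding dom_def
    by (rule the_equality) (use f hom_uniq in blast)+
  moreover have "cod f = b'" unfolding cod_def
    by (rule the_equality) (use f hom_uniq in blast)+
  ultimately show "f \<in> Hom C a b" by simp
qed

lemma homI: "Arr f \<Longrightarrow> f \<in> Hom C (dom f) (cod f)" by (simp add: hom_iff)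

lemma hom_ob: "f \<in> Hom C a b \<Longrightarrow> a \<in> Ob C \<and> b \<in> Ob C"
proof -
  have "\<forall>a b f. f \<in> Hom C a b \<longrightarrow> a \<in> Ob C \<and> b \<in> Ob C"
    using catC unfolding category_def by (elim conjE)
  then show "f \<in> Hom C a b \<Longrightarrow> a \<in> Ob C \<and> b \<in> Ob C" by blast
qed

lemma ob_dom[simp]: "Arr f \<Longrightarrow> dom f \<in> Ob C" using hom_ob homI by blast
lemma ob_cod[simp]: "Arr f \<Longrightarrow> cod f \<in> Ob C" using hom_ob homI by blast

lemma comp_hom: "f \<in> Hom C a b \<Longrightarrow> g \<in> Hom C b c \<Longrightarrow> comp C g f \<in> Hom C a c"
  using catC unfolding category_def by blast

lemma arr_comp[simp]: "Arr f \<Longrightarrow> Arr g \<Longrightarrow> cod f = dom g \<Longrightarrow> Arr (comp C g f)"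
  and dom_comp[simp]: "Arr f \<Longrightarrow> Arr g \<Longrightarrow> cod f = dom g \<Longrightarrow> dom (comp C g f) = dom f"
  and cod_comp[simp]: "Arr f \<Longrightarrow> Arr g \<Longrightarrow> cod f = dom g \<Longrightarrow> cod (comp C g f) = cod g"
  using comp_hom[of f "dom f" "cod f" g "cod g"] by (auto simp: hom_iff)

lemma id_hom: "a \<in> Ob C \<Longrightarrow> idm C a \<in> Hom C a a"
  using catC unfolding category_def by blast
lemma arr_id[simp]: "a \<in> Ob C \<Longrightarrow> Arr (idm C a)"
  and dom_id[simp]: "a \<in> Ob C \<Longrightarrow> dom (idm C a) = a"
  and cod_id[simp]: "a \<in> Ob C \<Longrightarrow> cod (idm C a) = a"
  using id_hom by (auto simp: hom_iff)

lemma assoc_hom: "f \<in> Hom C a b \<Longrightarrow> g \<in> Hom C b c \<Longrightarrow> h \<in> Hom C c d \<Longrightarrow>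
         comp C h (comp C g f) = comp C (comp C h g) f"
  using catC unfolding category_def by blast
lemma comp_assoc: "Arr f \<Longrightarrow> Arr g \<Longrightarrow> Arr h \<Longrightarrow> cod f = dom g \<Longrightarrow> cod g = dom h \<Longrightarrow>
   comp C h (comp C g f) = comp C (comp C h g) f"
  using assoc_hom[OF homI[of f] _ homI[of h]] homI[of g] by simp

lemma id_lr_hom: "f \<in> Hom C a b \<Longrightarrow> comp C f (idm C a) = f \<and> comp C (idm C b) f = f"
  using catC unfolding category_def by blast
lemma id_left[simp]: "Arr f \<Longrightarrow> cod f = b \<Longrightarrow> comp C (idm C b) f = f"
  using id_lr_hom[OF homI] by blast
lemma id_right[simp]: "Arr f \<Longrightarrow> dom f = a \<Longrightarrow> comp C f (idm C a) = f"
  using id_lr_hom[OF homI] by blast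

lemma pre1: "\<forall>a \<in> Ob C. \<forall>b \<in> Ob C.
        mzero C a b \<in> Hom C a b \<and>
        (\<forall>f \<in> Hom C a b. \<forall>g \<in> Hom C a b. madd C f g \<in> Hom C a b \<and> madd C f g = madd C g f) \<and>
        (\<forall>f \<in> Hom C a b. \<forall>g \<in> Hom C a b. \<forall>h \<in> Hom C a b.
            madd C (madd C f g) h = madd C f (madd C g h)) \<and>
        (\<forall>f \<in> Hom C a b. madd C f (mzero C a b) = f \<and> mneg C f \<in> Hom C a b \<and>
            madd C f (mneg C f) = mzero C a b)"
  using preC unfolding preadditive_def by (elim conjE)
lemma pre2: "\<forall>a b c f f' g. f \<in> Hom C a b \<longrightarrow> f' \<in> Hom C a b \<longrightarrow> g \<in> Hom C b c \<longrightarrow>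
         comp C g (madd C f f') = madd C (comp C g f) (comp C g f')"
  using preC unfolding preadditive_def by (elim conjE)
lemma pre3: "\<forall>a b c f g g'. f \<in> Hom C a b \<longrightarrow> g \<in> Hom C b c \<longrightarrow> g' \<in> Hom C b c \<longrightarrow>
         comp C (madd C g g') f = madd C (comp C g f) (comp C g' f)"
  using preC unfolding preadditive_def by (elim conjE)

lemma zero_hom: "a \<in> Ob C \<Longrightarrow> b \<in> Ob C \<Longrightarrow> mzero C a b \<in> Hom C a b"
  using pre1 by blast
lemma arr_zero[simp]: "a \<in> Ob C \<Longrightarrow> b \<in> Ob C \<Longrightarrow> Arr (mzero C a b)"
  and dom_zero[simp]: "a \<in> Ob C \<Longrightarrow> b \<in> Ob C \<Longrightarrow> dom (mzero C a b) = a"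
  and cod_zero[simp]: "a \<in> Ob C \<Longrightarrow> b \<in> Ob C \<Longrightarrow> cod (mzero C a b) = b"
  using zero_hom by (auto simp: hom_iff)

lemma add_hom: "f \<in> Hom C a b \<Longrightarrow> g \<in> Hom C a b \<Longrightarrow> madd C f g \<in> Hom C a b"
proof -
  assume a: "f \<in> Hom C a b" "g \<in> Hom C a b"
  then have "a \<in> Ob C" "b \<in> Ob C" using hom_ob by auto
  from pre1[rule_format, OF this] a show ?thesis by blast
qed
lemma arr_add[simp]: "Arr f \<Longrightarrow> Arr g \<Longrightarrow> dom g = dom f \<Longrightarrow> cod g = cod f \<Longrightarrow> Arr (madd C f g)"
  and dom_add[simp]: "Arr f \<Longrightarrow> Arr g \<Longrightarrow> dom g = dom f \<Longrightarrow> cod g = cod f \<Longrightarrow> dom (madd C f g) = dom f"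
  and cod_add[simp]: "Arr f \<Longrightarrow> Arr g \<Longrightarrow> dom g = dom f \<Longrightarrow> cod g = cod f \<Longrightarrow> cod (madd C f g) = cod f"
  using add_hom[of f "dom f" "cod f" g] by (auto simp: hom_iff)

lemma neg_hom: "f \<in> Hom C a b \<Longrightarrow> mneg C f \<in> Hom C a b"
proof -
  assume a: "f \<in> Hom C a b"
  then have "a \<in> Ob C" "b \<in> Ob C" using hom_ob by auto
  from pre1[rule_format, OF this] a show ?thesis by blast
qed
lemma arr_neg[simp]: "Arr f \<Longrightarrow> Arr (mneg C f)"
  and dom_neg[simp]: "Arr f \<Longrightarrow> dom (mneg C f) = dom f"
  and cod_neg[simp]: "Arr f \<Longrightarrow> cod (mneg C f) = cod f"
  using neg_hom[of f "dom f" "cod f"] by (auto simp: hom_iff)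

lemma pre_hom: "f \<in> Hom C a b \<Longrightarrow> g \<in> Hom C a b \<Longrightarrow> h \<in> Hom C a b \<Longrightarrow>
   madd C f g = madd C g f \<and> madd C (madd C f g) h = madd C f (madd C g h) \<and>
   madd C f (mzero C a b) = f \<and> madd C f (mneg C f) = mzero C a b"
proof -
  assume a: "f \<in> Hom C a b" "g \<in> Hom C a b" "h \<in> Hom C a b"
  then have ob: "a \<in> Ob C" "b \<in> Ob C" using hom_ob by blast+
  note P = pre1
  from P[rule_format, OF ob] a show ?thesis by blast
qed
lemma add_comm: "Arr f \<Longrightarrow> Arr g \<Longrightarrow> dom g = dom f \<Longrightarrow> cod g = cod f \<Longrightarrow> madd C f g = madd C g f"
proof -
  assume a: "Arr f" "Arr g" "dom g = dom f" "cod g = cod f"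
  then have "g \<in> Hom C (dom f) (cod f)" using homI[of g] by auto
  from pre_hom[OF homI[of f] this this] a show ?thesis by blast
qed
lemma add_assoc: "Arr f \<Longrightarrow> Arr g \<Longrightarrow> Arr h \<Longrightarrow> dom g = dom f \<Longrightarrow> cod g = cod f \<Longrightarrow>
    dom h = dom f \<Longrightarrow> cod h = cod f \<Longrightarrow> madd C (madd C f g) h = madd C f (madd C g h)"
proof -
  assume a: "Arr f" "Arr g" "Arr h" "dom g = dom f" "cod g = cod f" "dom h = dom f" "cod h = cod f"
  then have "g \<in> Hom C (dom f) (cod f)" "h \<in> Hom C (dom f) (cod f)" using homI[of g] homI[of h] by auto
  from pre_hom[OF homI[of f] this] a show ?thesis by blast
qed
lemma add_zero_r[simp]: "Arr f \<Longrightarrow> dom f = a \<Longrightarrow> cod f = b \<Longrightarrow> madd C f (mzero C a b) = f"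
  using pre_hom[OF homI[of f] homI[of f] homI[of f]] by blast
lemma add_neg_r[simp]: "Arr f \<Longrightarrow> madd C f (mneg C f) = mzero C (dom f) (cod f)"
  using pre_hom[OF homI[of f] homI[of f] homI[of f]] by blast
lemma add_zero_l[simp]: "Arr f \<Longrightarrow> dom f = a \<Longrightarrow> cod f = b \<Longrightarrow> madd C (mzero C a b) f = f"
proof -
  assume a: "Arr f" "dom f = a" "cod f = b"
  then have "madd C (mzero C a b) f = madd C f (mzero C a b)" by (intro add_comm) auto
  then show ?thesis using a by simp
qed
lemma add_neg_l[simp]: "Arr f \<Longrightarrow> madd C (mneg C f) f = mzero C (dom f) (cod f)"
proof -
  assume a: "Arr f"
  then have "madd C (mneg C f) f = madd C f (mneg C f)" by (intro add_comm) auto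
  then show ?thesis using a by simp
qed
lemma add_left_comm: "Arr f \<Longrightarrow> Arr g \<Longrightarrow> Arr h \<Longrightarrow> dom g = dom f \<Longrightarrow> cod g = cod f \<Longrightarrow>
    dom h = dom f \<Longrightarrow> cod h = cod f \<Longrightarrow> madd C f (madd C g h) = madd C g (madd C f h)"
proof -
  assume a: "Arr f" "Arr g" "Arr h" "dom g = dom f" "cod g = cod f" "dom h = dom f" "cod h = cod f"
  have "madd C f (madd C g h) = madd C (madd C f g) h" using a by (simp add: add_assoc)
  also have "\<dots> = madd C (madd C g f) h" using a add_comm[of f g] by simp
  also have "\<dots> = madd C g (madd C f h)" using a by (simp add: add_assoc)
  finally show ?thesis .
qed

lemma bil_hom: "f \<in> Hom C a b \<Longrightarrow> f' \<in> Hom C a b \<Longrightarrow> g \<in> Hom C b c \<Longrightarrow>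
         comp C g (madd C f f') = madd C (comp C g f) (comp C g f')"
  using pre2 by blast
lemma bil_hom2: "f \<in> Hom C a b \<Longrightarrow> g \<in> Hom C b c \<Longrightarrow> g' \<in> Hom C b c \<Longrightarrow>
         comp C (madd C g g') f = madd C (comp C g f) (comp C g' f)"
  using pre3 by blast
lemma comp_add_r: "Arr f \<Longrightarrow> Arr f' \<Longrightarrow> Arr g \<Longrightarrow> dom f' = dom f \<Longrightarrow> cod f' = cod f \<Longrightarrow> cod f = dom g \<Longrightarrow>
   comp C g (madd C f f') = madd C (comp C g f) (comp C g f')"
  using bil_hom[OF homI[of f], of f' g "cod g"] homI[of f'] homI[of g] by simp
lemma comp_add_l: "Arr f \<Longrightarrow> Arr g \<Longrightarrow> Arr g' \<Longrightarrow> dom g' = dom g \<Longrightarrow> cod g' = cod g \<Longrightarrow> cod f = dom g \<Longrightarrow>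
   comp C (madd C g g') f = madd C (comp C g f) (comp C g' f)"
  using bil_hom2[OF homI[of f], of g "cod g" g'] homI[of g'] homI[of g] by simp

lemma add_cancel_l: "Arr x \<Longrightarrow> Arr y \<Longrightarrow> Arr y' \<Longrightarrow> dom y = dom x \<Longrightarrow> cod y = cod x \<Longrightarrow>
   dom y' = dom x \<Longrightarrow> cod y' = cod x \<Longrightarrow> madd C x y = madd C x y' \<Longrightarrow> y = y'"
proof -
  assume a: "Arr x" "Arr y" "Arr y'" "dom y = dom x" "cod y = cod x" "dom y' = dom x" "cod y' = cod x"
    and e: "madd C x y = madd C x y'"
  have "y = madd C (madd C (mneg C x) x) y" using a by simp
  also have "\<dots> = madd C (mneg C x) (madd C x y)" by (rule add_assoc) (use a in auto)
  also have "\<dots> = madd C (mneg C x) (madd C x y')" using e by simp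
  also have "\<dots> = madd C (madd C (mneg C x) x) y'" by (rule add_assoc[symmetric]) (use a in auto)
  also have "\<dots> = y'" using a by simp
  finally show ?thesis .
qed

lemma neg_unique: "Arr x \<Longrightarrow> Arr y \<Longrightarrow> dom y = dom x \<Longrightarrow> cod y = cod x \<Longrightarrow>
   madd C x y = mzero C (dom x) (cod x) \<Longrightarrow> y = mneg C x"
  by (rule add_cancel_l[of x]) auto

lemma zero_unique: "Arr x \<Longrightarrow> Arr y \<Longrightarrow> dom y = dom x \<Longrightarrow> cod y = cod x \<Longrightarrow>
   madd C x y = x \<Longrightarrow> y = mzero C (dom x) (cod x)"
  by (rule add_cancel_l[of x]) auto

lemma comp_zero_r[simp]: "Arr g \<Longrightarrow> a \<in> Ob C \<Longrightarrow> dom g = b \<Longrightarrow> comp C g (mzero C a b) = mzero C a (cod g)"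
proof -
  assume a0: "Arr g" "a \<in> Ob C" "dom g = b"
  then have "b \<in> Ob C" using ob_dom by blast
  note a = a0 this
  let ?x = "comp C g (mzero C a b)"
  have "madd C ?x ?x = comp C g (madd C (mzero C a b) (mzero C a b))"
    by (rule comp_add_r[symmetric]) (use a in auto)
  also have "\<dots> = ?x" using a by simp
  finally have "madd C ?x ?x = ?x" .
  then show ?thesis using zero_unique[of ?x ?x] a by simp
qed

lemma comp_zero_l[simp]: "Arr f \<Longrightarrow> c \<in> Ob C \<Longrightarrow> cod f = b \<Longrightarrow> comp C (mzero C b c) f = mzero C (dom f) c"
proof -
  assume a0: "Arr f" "c \<in> Ob C" "cod f = b"
  then have "b \<in> Ob C" using ob_cod by blast
  note a = a0 this
  let ?x = "comp C (mzero C b c) f"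
  have "madd C ?x ?x = comp C (madd C (mzero C b c) (mzero C b c)) f"
    by (rule comp_add_l[symmetric]) (use a in auto)
  also have "\<dots> = ?x" using a by simp
  finally have "madd C ?x ?x = ?x" .
  then show ?thesis using zero_unique[of ?x ?x] a by simp
qed

lemma comp_neg_r[simp]: "Arr f \<Longrightarrow> Arr g \<Longrightarrow> cod f = dom g \<Longrightarrow> comp C g (mneg C f) = mneg C (comp C g f)"
proof -
  assume a: "Arr f" "Arr g" "cod f = dom g"
  have "madd C (comp C g f) (comp C g (mneg C f)) = comp C g (madd C f (mneg C f))"
    by (rule comp_add_r[symmetric]) (use a in auto)
  also have "\<dots> = mzero C (dom f) (cod g)" using a by simp
  finally show ?thesis using neg_unique a by simp
qed

lemma comp_neg_l[simp]: "Arr f \<Longrightarrow> Arr g \<Longrightarrow> cod f = dom g \<Longrightarrow> comp C (mneg C g) f = mneg C (comp C g f)"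
proof -
  assume a: "Arr f" "Arr g" "cod f = dom g"
  have "madd C (comp C g f) (comp C (mneg C g) f) = comp C (madd C g (mneg C g)) f"
    by (rule comp_add_l[symmetric]) (use a in auto)
  also have "\<dots> = mzero C (dom f) (cod g)" using a by simp
  finally show ?thesis using neg_unique a by simp
qed

lemma neg_neg[simp]: "Arr f \<Longrightarrow> mneg C (mneg C f) = f"
  using neg_unique[of "mneg C f" f] by simp

lemma neg_zero[simp]: "a \<in> Ob C \<Longrightarrow> b \<in> Ob C \<Longrightarrow> mneg C (mzero C a b) = mzero C a b"
  using neg_unique[of "mzero C a b" "mzero C a b"] by simp

lemma neg_inj: "Arr f \<Longrightarrow> Arr g \<Longrightarrow> mneg C f = mneg C g \<Longrightarrow> f = g"
  by (metis neg_neg)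

lemma ob_sh[simp]: "a \<in> Ob C \<Longrightarrow> ShO C a \<in> Ob C"
  using shC unfolding shift_ok_def by blast
lemma sh_hom: "f \<in> Hom C a b \<Longrightarrow> ShM C f \<in> Hom C (ShO C a) (ShO C b)"
  using shC unfolding shift_ok_def by blast
lemma arr_sh[simp]: "Arr f \<Longrightarrow> Arr (ShM C f)"
  and dom_sh[simp]: "Arr f \<Longrightarrow> dom (ShM C f) = ShO C (dom f)"
  and cod_sh[simp]: "Arr f \<Longrightarrow> cod (ShM C f) = ShO C (cod f)"
  using sh_hom[of f "dom f" "cod f"] by (auto simp: hom_iff)
lemma sh_id[simp]: "a \<in> Ob C \<Longrightarrow> ShM C (idm C a) = idm C (ShO C a)"
  using shC unfolding shift_ok_def by blast
lemma sh_comp: "Arr f \<Longrightarrow> Arr g \<Longrightarrow> cod f = dom g \<Longrightarrow> ShM C (comp C g f) = comp C (ShM C g) (ShM C f)"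
proof -
  assume a: "Arr f" "Arr g" "cod f = dom g"
  have "\<forall>a b c f g. f \<in> Hom C a b \<longrightarrow> g \<in> Hom C b c \<longrightarrow>
         ShM C (comp C g f) = comp C (ShM C g) (ShM C f)" using shC unfolding shift_ok_def by blast
  then show ?thesis using homI[of f] homI[of g] a by simp
qed
lemma sh_add: "Arr f \<Longrightarrow> Arr g \<Longrightarrow> dom g = dom f \<Longrightarrow> cod g = cod f \<Longrightarrow> ShM C (madd C f g) = madd C (ShM C f) (ShM C g)"
proof -
  assume a: "Arr f" "Arr g" "dom g = dom f" "cod g = cod f"
  have "\<forall>a b f g. f \<in> Hom C a b \<longrightarrow> g \<in> Hom C a b \<longrightarrow>
         ShM C (madd C f g) = madd C (ShM C f) (ShM C g)" using shC unfolding shift_ok_def by blast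
  then show ?thesis using homI[of f] homI[of g] a by simp
qed
lemma sh_bij: "a \<in> Ob C \<Longrightarrow> b \<in> Ob C \<Longrightarrow> bij_betw (ShM C) (Hom C a b) (Hom C (ShO C a) (ShO C b))"
  using shC unfolding shift_ok_def by blast
lemma sh_inj: "Arr f \<Longrightarrow> Arr g \<Longrightarrow> dom g = dom f \<Longrightarrow> cod g = cod f \<Longrightarrow> ShM C f = ShM C g \<Longrightarrow> f = g"
proof -
  assume a: "Arr f" "Arr g" "dom g = dom f" "cod g = cod f" "ShM C f = ShM C g"
  have "inj_on (ShM C) (Hom C (dom f) (cod f))" using sh_bij[of "dom f" "cod f"] a unfolding bij_betw_def by simp
  moreover have "f \<in> Hom C (dom f) (cod f)" "g \<in> Hom C (dom f) (cod f)" using a homI[of f] homI[of g] by auto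
  ultimately show ?thesis using a(5) unfolding inj_on_def by blast
qed
lemma sh_surj: "w \<in> Hom C (ShO C a) (ShO C b) \<Longrightarrow> a \<in> Ob C \<Longrightarrow> b \<in> Ob C \<Longrightarrow> \<exists>q \<in> Hom C a b. ShM C q = w"
proof -
  assume a: "w \<in> Hom C (ShO C a) (ShO C b)" "a \<in> Ob C" "b \<in> Ob C"
  have "ShM C ` Hom C a b = Hom C (ShO C a) (ShO C b)" using sh_bij[of a b] a unfolding bij_betw_def by simp
  then have "w \<in> ShM C ` Hom C a b" using a(1) by simp
  then show ?thesis by (auto simp: image_iff)
qed
lemma sh_zero[simp]: "a \<in> Ob C \<Longrightarrow> b \<in> Ob C \<Longrightarrow> ShM C (mzero C a b) = mzero C (ShO C a) (ShO C b)"
proof -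
  assume a: "a \<in> Ob C" "b \<in> Ob C"
  let ?x = "ShM C (mzero C a b)"
  have "madd C ?x ?x = ShM C (madd C (mzero C a b) (mzero C a b))" by (rule sh_add[symmetric]) (use a in auto)
  also have "\<dots> = ?x" using a by simp
  finally show ?thesis using zero_unique[of ?x ?x] a by simp
qed
lemma sh_neg[simp]: "Arr f \<Longrightarrow> ShM C (mneg C f) = mneg C (ShM C f)"
proof -
  assume a: "Arr f"
  have "madd C (ShM C f) (ShM C (mneg C f)) = ShM C (madd C f (mneg C f))" by (rule sh_add[symmetric]) (use a in auto)
  also have "\<dots> = mzero C (dom (ShM C f)) (cod (ShM C f))" using a by simp
  finally show ?thesis using neg_unique a by simp
qed

end

context tri
begin

lemma ax_is: "\<forall>T \<in> Tri C. is_triangle C T"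
  using T unfolding triangulated_def by (elim conjE)
lemma ax_iso: "\<forall>T T'. T \<in> Tri C \<longrightarrow> is_triangle C T' \<longrightarrow> tri_iso C T T' \<longrightarrow> T' \<in> Tri C"
  using T unfolding triangulated_def by (elim conjE)
lemma ax_id: "\<forall>X \<in> Ob C. \<forall>Z. zero_object C Z \<longrightarrow>
         (X, X, Z, idm C X, mzero C X Z, mzero C Z (ShO C X)) \<in> Tri C"
  using T unfolding triangulated_def by (elim conjE)
lemma ax_cone: "\<forall>X Y f. f \<in> Hom C X Y \<longrightarrow> (\<exists>Z g h. (X, Y, Z, f, g, h) \<in> Tri C)"
  using T unfolding triangulated_def by (elim conjE)
lemma ax_rot: "\<forall>X Y Z f g h. is_triangle C (X, Y, Z, f, g, h) \<longrightarrow>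
        ((X, Y, Z, f, g, h) \<in> Tri C \<longleftrightarrow> (Y, Z, ShO C X, g, h, mneg C (ShM C f)) \<in> Tri C)"
  using T unfolding triangulated_def by (elim conjE)
lemma ax_tr3: "\<forall>X Y Z f g h X' Y' Z' f' g' h' u v.
        (X, Y, Z, f, g, h) \<in> Tri C \<longrightarrow> (X', Y', Z', f', g', h') \<in> Tri C \<longrightarrow>
        u \<in> Hom C X X' \<longrightarrow> v \<in> Hom C Y Y' \<longrightarrow> comp C v f = comp C f' u \<longrightarrow>
        (\<exists>w. tri_morph C (X, Y, Z, f, g, h) (X', Y', Z', f', g', h') u v w)"
  using T unfolding triangulated_def by (elim conjE)
lemma ax_tr4: "\<forall>X Y Z f g Q1 p1 d1 Q2 p2 d2 Q3 p3 d3.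
        f \<in> Hom C X Y \<longrightarrow> g \<in> Hom C Y Z \<longrightarrow>
        (X, Y, Q1, f, p1, d1) \<in> Tri C \<longrightarrow>
        (X, Z, Q2, comp C g f, p2, d2) \<in> Tri C \<longrightarrow>
        (Y, Z, Q3, g, p3, d3) \<in> Tri C \<longrightarrow>
        (\<exists>a b. a \<in> Hom C Q1 Q2 \<and> b \<in> Hom C Q2 Q3 \<and>
           (Q1, Q2, Q3, a, b, comp C (ShM C p1) d3) \<in> Tri C \<and>
           comp C a p1 = comp C p2 g \<and> comp C d2 a = d1 \<and>
           comp C b p2 = p3 \<and> comp C d3 b = comp C (ShM C f) d2)"
  using T unfolding triangulated_def by (elim conjE)

lemma tri_homs: "(X, Y, Z, f, g, h) \<in> Tri C \<Longrightarrow> f \<in> Hom C X Y \<and> g \<in> Hom C Y Z \<and> h \<in> Hom C Z (ShO C X)"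
proof -
  assume "(X, Y, Z, f, g, h) \<in> Tri C"
  then have "is_triangle C (X, Y, Z, f, g, h)" using ax_is by blast
  then show ?thesis unfolding is_triangle_def by simp
qed

lemma tri_arr: "(X, Y, Z, f, g, h) \<in> Tri C \<Longrightarrow>
   Arr f \<and> dom f = X \<and> cod f = Y \<and> Arr g \<and> dom g = Y \<and> cod g = Z \<and> Arr h \<and> dom h = Z \<and> cod h = ShO C X
   \<and> X \<in> Ob C \<and> Y \<in> Ob C \<and> Z \<in> Ob C"
  using tri_homs[of X Y Z f g h] hom_ob[of f X Y] hom_ob[of g Y Z] by (auto simp: hom_iff)

lemma rot: "(X, Y, Z, f, g, h) \<in> Tri C \<Longrightarrow> (Y, Z, ShO C X, g, h, mneg C (ShM C f)) \<in> Tri C"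
proof -
  assume t: "(X, Y, Z, f, g, h) \<in> Tri C"
  then have "is_triangle C (X, Y, Z, f, g, h)" using tri_homs[of X Y Z f g h] unfolding is_triangle_def by simp
  from ax_rot[rule_format, OF this] t show ?thesis by blast
qed

lemma cone: "f \<in> Hom C X Y \<Longrightarrow> \<exists>Z g h. (X, Y, Z, f, g, h) \<in> Tri C"
  using ax_cone by blast

lemma tr3: "(X, Y, Z, f, g, h) \<in> Tri C \<Longrightarrow> (X', Y', Z', f', g', h') \<in> Tri C \<Longrightarrow>
        u \<in> Hom C X X' \<Longrightarrow> v \<in> Hom C Y Y' \<Longrightarrow> comp C v f = comp C f' u \<Longrightarrow>
        \<exists>w. w \<in> Hom C Z Z' \<and> comp C w g = comp C g' v \<and> comp C (ShM C u) h = comp C h' w"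
proof -
  assume a: "(X, Y, Z, f, g, h) \<in> Tri C" "(X', Y', Z', f', g', h') \<in> Tri C"
        "u \<in> Hom C X X'" "v \<in> Hom C Y Y'" "comp C v f = comp C f' u"
  then obtain w where "tri_morph C (X, Y, Z, f, g, h) (X', Y', Z', f', g', h') u v w"
    using ax_tr3 by blast
  then show ?thesis unfolding tri_morph_def by auto
qed

definition z0 :: 'o where "z0 = (SOME z. zero_object C z)"

lemma z0: "zero_object C z0"
proof -
  have "\<exists>z. zero_object C z" using additiveC unfolding additive_def by blast
  then show ?thesis unfolding z0_def by (rule someI_ex)
qed

lemma z0_ob[simp]: "z0 \<in> Ob C" using z0 unfolding zero_object_def by blast

lemma to_zero: "zero_object C z \<Longrightarrow> f \<in> Hom C a z \<Longrightarrow> f = mzero C a z"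
proof -
  assume z: "zero_object C z" and f: "f \<in> Hom C a z"
  have a: "a \<in> Ob C" "z \<in> Ob C" using f hom_ob by auto
  then have "\<exists>!f. f \<in> Hom C a z" using z unfolding zero_object_def by blast
  then show ?thesis using f zero_hom[OF a] by blast
qed

lemma from_zero: "zero_object C z \<Longrightarrow> f \<in> Hom C z a \<Longrightarrow> f = mzero C z a"
proof -
  assume z: "zero_object C z" and f: "f \<in> Hom C z a"
  have a: "z \<in> Ob C" "a \<in> Ob C" using f hom_ob by auto
  then have "\<exists>!f. f \<in> Hom C z a" using z unfolding zero_object_def by blast
  then show ?thesis using f zero_hom[OF a] by blast
qed

lemma id_tri: "X \<in> Ob C \<Longrightarrow> (X, X, z0, idm C X, mzero C X z0, mzero C z0 (ShO C X)) \<in> Tri C"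
  using ax_id z0 by blast

lemma id_tri_z: "zero_object C z \<Longrightarrow> X \<in> Ob C \<Longrightarrow> (X, X, z, idm C X, mzero C X z, mzero C z (ShO C X)) \<in> Tri C"
  using ax_id by blast

lemma tr4: "f \<in> Hom C X Y \<Longrightarrow> g \<in> Hom C Y Z \<Longrightarrow>
        (X, Y, Q1, f, p1, d1) \<in> Tri C \<Longrightarrow>
        (X, Z, Q2, comp C g f, p2, d2) \<in> Tri C \<Longrightarrow>
        (Y, Z, Q3, g, p3, d3) \<in> Tri C \<Longrightarrow>
        \<exists>a b. (Q1, Q2, Q3, a, b, comp C (ShM C p1) d3) \<in> Tri C"
  using ax_tr4 by blast

lemma comp0: "(X, Y, Z, f, g, h) \<in> Tri C \<Longrightarrow> comp C g f = mzero C X Z"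
proof -
  assume t: "(X, Y, Z, f, g, h) \<in> Tri C"
  note A = tri_arr[OF t]
  have "\<exists>w. w \<in> Hom C z0 Z \<and> comp C w (mzero C X z0) = comp C g f \<and> comp C (ShM C (idm C X)) (mzero C z0 (ShO C X)) = comp C h w"
    by (rule tr3[OF id_tri t]) (use A in \<open>auto simp: hom_iff\<close>)
  then obtain w where w: "w \<in> Hom C z0 Z" "comp C w (mzero C X z0) = comp C g f" by blast
  have "comp C w (mzero C X z0) = mzero C X Z" using w A by (auto simp: hom_iff)
  then show ?thesis using w by simp
qed

lemma exact_mid: "(A, B, Cc, a, b, c) \<in> Tri C \<Longrightarrow> m \<in> Hom C W B \<Longrightarrow> comp C b m = mzero C W Cc \<Longrightarrow>
   \<exists>q \<in> Hom C W A. m = comp C a q"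
proof -
  assume t: "(A, B, Cc, a, b, c) \<in> Tri C" and m: "m \<in> Hom C W B" and bm: "comp C b m = mzero C W Cc"
  note At = tri_arr[OF t]
  have W: "W \<in> Ob C" using m hom_ob by blast
  have t0: "(W, z0, ShO C W, mzero C W z0, mzero C z0 (ShO C W), mneg C (ShM C (idm C W))) \<in> Tri C"
    using rot[OF id_tri[OF W]] .
  have t1: "(B, Cc, ShO C A, b, c, mneg C (ShM C a)) \<in> Tri C" using rot[OF t] .
  have z: "mzero C z0 Cc \<in> Hom C z0 Cc" using At by (simp add: zero_hom)
  have e0: "comp C (mzero C z0 Cc) (mzero C W z0) = comp C b m" using bm At W by simp
  obtain w where w: "w \<in> Hom C (ShO C W) (ShO C A)"
     "comp C (ShM C m) (mneg C (ShM C (idm C W))) = comp C (mneg C (ShM C a)) w"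
    using tr3[OF t0 t1 m z e0] by blast
  have mA: "Arr m" "dom m = W" "cod m = B" using m by (auto simp: hom_iff)
  have wA: "Arr w" "dom w = ShO C W" "cod w = ShO C A" using w by (auto simp: hom_iff)
  have "mneg C (ShM C m) = mneg C (comp C (ShM C a) w)" using w(2) mA wA At W by simp
  then have e: "ShM C m = comp C (ShM C a) w" using neg_inj mA wA At by simp
  obtain q where q: "q \<in> Hom C W A" "ShM C q = w" using sh_surj[OF w(1) W] At by blast
  have qA: "Arr q" "dom q = W" "cod q = A" using q by (auto simp: hom_iff)
  have e2: "ShM C (comp C a q) = ShM C m" using e q qA At by (simp add: sh_comp)
  have "comp C a q = m" by (rule sh_inj[OF _ _ _ _ e2]) (use qA At mA in auto)
  then show ?thesis using q by blast
qed

end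

context tri
begin

lemma split_mono: "(X, Y, Z, f, g, mzero C Z (ShO C X)) \<in> Tri C \<Longrightarrow> t1 \<in> Hom C W X \<Longrightarrow> t2 \<in> Hom C W X \<Longrightarrow>
   comp C f t1 = comp C f t2 \<Longrightarrow> t1 = t2"
proof -
  assume t: "(X, Y, Z, f, g, mzero C Z (ShO C X)) \<in> Tri C" and t1: "t1 \<in> Hom C W X" and t2: "t2 \<in> Hom C W X"
    and e: "comp C f t1 = comp C f t2"
  note At = tri_arr[OF t]
  have A1: "Arr t1" "dom t1 = W" "cod t1 = X" using t1 by (auto simp: hom_iff)
  have A2: "Arr t2" "dom t2 = W" "cod t2 = X" using t2 by (auto simp: hom_iff)
  have W: "W \<in> Ob C" using A1 by auto
  let ?t = "madd C t1 (mneg C t2)"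
  have At': "Arr ?t" "dom ?t = W" "cod ?t = X" using A1 A2 by auto
  have ft: "comp C f ?t = mzero C W Y"
  proof -
    have "comp C f ?t = madd C (comp C f t1) (comp C f (mneg C t2))"
      by (rule comp_add_r) (use A1 A2 At in auto)
    also have "\<dots> = madd C (comp C f t2) (mneg C (comp C f t2))" using e A2 At by simp
    also have "\<dots> = mzero C W Y" using A2 At by simp
    finally show ?thesis .
  qed
  have t'': "(Z, ShO C X, ShO C Y, mzero C Z (ShO C X), mneg C (ShM C f), mneg C (ShM C g)) \<in> Tri C"
    using rot[OF rot[OF t]] .
  have m: "ShM C ?t \<in> Hom C (ShO C W) (ShO C X)" using At' by (simp add: hom_iff)
  have "comp C (mneg C (ShM C f)) (ShM C ?t) = mneg C (ShM C (comp C f ?t))"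
    using At At' by (simp add: sh_comp)
  also have "\<dots> = mzero C (ShO C W) (ShO C Y)" using ft W At by simp
  finally obtain q where q: "q \<in> Hom C (ShO C W) Z" "ShM C ?t = comp C (mzero C Z (ShO C X)) q"
    using exact_mid[OF t'' m] by blast
  have "ShM C ?t = mzero C (ShO C W) (ShO C X)" using q At by (simp add: hom_iff)
  also have "\<dots> = ShM C (mzero C W X)" using W At by simp
  finally have "?t = mzero C W X" by (rule sh_inj[rotated 4]) (use At' W At in auto)
  then have "mneg C t2 = mneg C t1" using neg_unique[of t1 "mneg C t2"] A1 A2 by simp
  then show "t1 = t2" using neg_inj A1 A2 by metis
qed

lemma split_maps:
  assumes t: "(X, Y, Z, f, g, mzero C Z (ShO C X)) \<in> Tri C"
  shows "\<exists>s p. s \<in> Hom C Z Y \<and> p \<in> Hom C Y X \<and> comp C g s = idm C Z \<and> comp C p f = idm C X \<and>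
     comp C p s = mzero C Z X \<and> comp C g f = mzero C X Z \<and> madd C (comp C f p) (comp C s g) = idm C Y"
proof -
  note At = tri_arr[OF t]
  have "\<exists>s \<in> Hom C Z Y. idm C Z = comp C g s"
    by (rule exact_mid[OF rot[OF t]]) (use At in \<open>auto simp: hom_iff\<close>)
  then obtain s where s: "s \<in> Hom C Z Y" "comp C g s = idm C Z" by auto
  have As: "Arr s" "dom s = Z" "cod s = Y" using s by (auto simp: hom_iff)
  have gf: "comp C g f = mzero C X Z" using comp0[OF t] .
  let ?m = "madd C (idm C Y) (mneg C (comp C s g))"
  have Am: "Arr ?m" "dom ?m = Y" "cod ?m = Y" using As At by auto
  have gm: "comp C g ?m = mzero C Y Z"
  proof -
    have "comp C g ?m = madd C (comp C g (idm C Y)) (comp C g (mneg C (comp C s g)))"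
      by (rule comp_add_r) (use As At in auto)
    also have "\<dots> = madd C g (mneg C (comp C g (comp C s g)))" using As At by simp
    also have "comp C g (comp C s g) = comp C (comp C g s) g" by (rule comp_assoc) (use As At in auto)
    also have "\<dots> = g" using s(2) At by simp
    finally show ?thesis using At by simp
  qed
  have "\<exists>p \<in> Hom C Y X. ?m = comp C f p"
    by (rule exact_mid[OF t]) (use Am gm in \<open>auto simp: hom_iff\<close>)
  then obtain p where p: "p \<in> Hom C Y X" "comp C f p = ?m" by auto
  have Ap: "Arr p" "dom p = Y" "cod p = X" using p by (auto simp: hom_iff)
  have pf: "comp C p f = idm C X"
  proof (rule split_mono[OF t])
    show "comp C p f \<in> Hom C X X" using Ap At by (simp add: hom_iff)
    show "idm C X \<in> Hom C X X" using At by (simp add: hom_iff)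
    have "comp C f (comp C p f) = comp C (comp C f p) f" by (rule comp_assoc) (use Ap At in auto)
    also have "\<dots> = comp C ?m f" using p by simp
    also have "\<dots> = madd C (comp C (idm C Y) f) (comp C (mneg C (comp C s g)) f)"
      by (rule comp_add_l) (use As At in auto)
    also have "\<dots> = madd C f (mneg C (comp C (comp C s g) f))" using As At by simp
    also have "comp C (comp C s g) f = comp C s (comp C g f)" by (rule comp_assoc[symmetric]) (use As At in auto)
    also have "\<dots> = mzero C X Y" using gf As At by simp
    finally show "comp C f (comp C p f) = comp C f (idm C X)" using At by simp
  qed
  have ps: "comp C p s = mzero C Z X"
  proof (rule split_mono[OF t])
    show "comp C p s \<in> Hom C Z X" using Ap As At by (simp add: hom_iff)
    show "mzero C Z X \<in> Hom C Z X" using At by (simp add: hom_iff)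
    have "comp C f (comp C p s) = comp C (comp C f p) s" by (rule comp_assoc) (use Ap As At in auto)
    also have "\<dots> = comp C ?m s" using p by simp
    also have "\<dots> = madd C (comp C (idm C Y) s) (comp C (mneg C (comp C s g)) s)"
      by (rule comp_add_l) (use As At in auto)
    also have "\<dots> = madd C s (mneg C (comp C (comp C s g) s))" using As At by simp
    also have "comp C (comp C s g) s = comp C s (comp C g s)" by (rule comp_assoc[symmetric]) (use As At in auto)
    also have "\<dots> = s" using s(2) As by simp
    finally show "comp C f (comp C p s) = comp C f (mzero C Z X)" using As At by simp
  qed
  have sum: "madd C (comp C f p) (comp C s g) = idm C Y"
  proof -
    have "madd C (comp C f p) (comp C s g) = madd C (idm C Y) (madd C (mneg C (comp C s g)) (comp C s g))"
      using p(2) by (simp only:) (rule add_assoc, use As At in auto)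
    also have "\<dots> = idm C Y" using As At by simp
    finally show ?thesis .
  qed
  show ?thesis using s p pf ps gf sum by blast
qed

lemma split_bp: "(X, Y, Z, f, g, mzero C Z (ShO C X)) \<in> Tri C \<Longrightarrow> is_biproduct C X Z Y"
proof -
  assume t: "(X, Y, Z, f, g, mzero C Z (ShO C X)) \<in> Tri C"
  note At = tri_arr[OF t]
  obtain s p where sp: "s \<in> Hom C Z Y" "p \<in> Hom C Y X" "comp C g s = idm C Z" "comp C p f = idm C X"
     "comp C p s = mzero C Z X" "comp C g f = mzero C X Z" "madd C (comp C f p) (comp C s g) = idm C Y"
    using split_maps[OF t] by blast
  have "f \<in> Hom C X Y" "g \<in> Hom C Y Z" using At by (auto simp: hom_iff)
  then show ?thesis unfolding is_biproduct_def using At sp by blast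
qed

lemma bp_tri:
  assumes h: "i1 \<in> Hom C U S" "i2 \<in> Hom C V S" "p1 \<in> Hom C S U" "p2 \<in> Hom C S V"
    and e: "comp C p1 i1 = idm C U" "comp C p2 i2 = idm C V" "comp C p2 i1 = mzero C U V"
      "comp C p1 i2 = mzero C V U" "madd C (comp C i1 p1) (comp C i2 p2) = idm C S"
  shows "(U, S, V, i1, p2, mzero C V (ShO C U)) \<in> Tri C"
proof -
  have A: "Arr i1" "dom i1 = U" "cod i1 = S" "Arr i2" "dom i2 = V" "cod i2 = S"
    "Arr p1" "dom p1 = S" "cod p1 = U" "Arr p2" "dom p2 = S" "cod p2 = V" using h by (auto simp: hom_iff)
  have U: "U \<in> Ob C" and V: "V \<in> Ob C" and S: "S \<in> Ob C" using A by auto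
  obtain W g h where t: "(U, S, W, i1, g, h) \<in> Tri C" using cone[OF h(1)] by blast
  note At = tri_arr[OF t]
  obtain w where w: "w \<in> Hom C W z0" "comp C (ShM C (idm C U)) h = comp C (mzero C z0 (ShO C U)) w"
    using tr3[OF t id_tri[OF U] id_hom[OF U] h(3)] e(1) A by auto
  have h0: "h = mzero C W (ShO C U)" using w At U by (auto simp: hom_iff)
  with t have t': "(U, S, W, i1, g, mzero C W (ShO C U)) \<in> Tri C" by simp
  obtain s p where sp: "s \<in> Hom C W S" "p \<in> Hom C S U" "comp C g s = idm C W" "comp C p i1 = idm C U"
     "comp C p s = mzero C W U" "comp C g i1 = mzero C U W" "madd C (comp C i1 p) (comp C s g) = idm C S"
    using split_maps[OF t'] by blast
  have As: "Arr s" "dom s = W" "cod s = S" "Arr p" "dom p = S" "cod p = U" using sp by (auto simp: hom_iff)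
  define \<beta> where "\<beta> = comp C p2 s"
  define \<alpha> where "\<alpha> = comp C g i2"
  have Ab: "Arr \<beta>" "dom \<beta> = W" "cod \<beta> = V" "Arr \<alpha>" "dom \<alpha> = V" "cod \<alpha> = W"
    unfolding \<alpha>_def \<beta>_def using A As U V S At by auto
  have p2sg: "comp C p2 (comp C s g) = p2"
  proof -
    have "p2 = comp C p2 (madd C (comp C i1 p) (comp C s g))" using sp(7) A by simp
    also have "\<dots> = madd C (comp C p2 (comp C i1 p)) (comp C p2 (comp C s g))"
      by (rule comp_add_r) (use A As U V S At in auto)
    also have "comp C p2 (comp C i1 p) = comp C (comp C p2 i1) p" by (rule comp_assoc) (use A As U V S in auto)
    also have "\<dots> = mzero C S V" using e(3) A As U V S by simp
    finally have "p2 = madd C (mzero C S V) (comp C p2 (comp C s g))" .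
    then show ?thesis using A As U V S At by simp
  qed
  have bg: "comp C \<beta> g = p2"
    unfolding \<beta>_def using p2sg comp_assoc[of g s p2] A As U V S At by simp
  have ba: "comp C \<beta> \<alpha> = idm C V"
  proof -
    have "comp C \<beta> \<alpha> = comp C (comp C \<beta> g) i2" unfolding \<alpha>_def by (rule comp_assoc) (use A As U V S At Ab in auto)
    then show ?thesis using bg e(2) by simp
  qed
  have ab: "comp C \<alpha> \<beta> = idm C W"
  proof -
    have "idm C W = comp C g (comp C (madd C (comp C i1 p1) (comp C i2 p2)) s)" using sp(3) e(5) As by simp
    also have "comp C (madd C (comp C i1 p1) (comp C i2 p2)) s = madd C (comp C (comp C i1 p1) s) (comp C (comp C i2 p2) s)"
      by (rule comp_add_l) (use A As U V S in auto)
    also have "comp C g \<dots> = madd C (comp C g (comp C (comp C i1 p1) s)) (comp C g (comp C (comp C i2 p2) s))"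
      by (rule comp_add_r) (use A As U V S At in auto)
    also have "comp C g (comp C (comp C i1 p1) s) = comp C (comp C g i1) (comp C p1 s)"
      using comp_assoc[of s p1 i1] comp_assoc[of "comp C p1 s" i1 g] A As U V S At by simp
    also have "\<dots> = mzero C W W" using sp(6) A As U V S At by simp
    also have "comp C g (comp C (comp C i2 p2) s) = comp C \<alpha> \<beta>"
      unfolding \<alpha>_def \<beta>_def using comp_assoc[of s p2 i2] comp_assoc[of "comp C p2 s" i2 g] A As U V S At by simp
    finally show ?thesis using Ab by simp
  qed
  have isoU: "is_iso C (idm C U) U U" unfolding is_iso_def using U by (auto intro!: bexI[of _ "idm C U"] simp: hom_iff)
  have isoS: "is_iso C (idm C S) S S" unfolding is_iso_def using S by (auto intro!: bexI[of _ "idm C S"] simp: hom_iff)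
  have isoW: "is_iso C \<beta> W V" unfolding is_iso_def using Ab ab ba by (auto intro!: bexI[of _ \<alpha>] simp: hom_iff)
  have mor: "tri_morph C (U, S, W, i1, g, mzero C W (ShO C U)) (U, S, V, i1, p2, mzero C V (ShO C U)) (idm C U) (idm C S) \<beta>"
    unfolding tri_morph_def using A Ab At bg U S by (auto simp: hom_iff)
  have "tri_iso C (U, S, W, i1, g, mzero C W (ShO C U)) (U, S, V, i1, p2, mzero C V (ShO C U))"
    unfolding tri_iso_def using mor isoU isoS isoW by auto
  moreover have "is_triangle C (U, S, V, i1, p2, mzero C V (ShO C U))"
    unfolding is_triangle_def using h U V by (simp add: zero_hom)
  ultimately show ?thesis using ax_iso t' by blast
qed

lemma bp_maps:
  assumes "is_biproduct C A B S"
  obtains i1 i2 p1 p2 where "i1 \<in> Hom C A S" "i2 \<in> Hom C B S" "p1 \<in> Hom C S A" "p2 \<in> Hom C S B"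
      "comp C p1 i1 = idm C A" "comp C p2 i2 = idm C B" "comp C p2 i1 = mzero C A B"
      "comp C p1 i2 = mzero C B A" "madd C (comp C i1 p1) (comp C i2 p2) = idm C S"
  using assms unfolding is_biproduct_def by blast

lemma bp_ob: "is_biproduct C A B S \<Longrightarrow> A \<in> Ob C \<and> B \<in> Ob C \<and> S \<in> Ob C"
  unfolding is_biproduct_def by blast

lemma bp_swap: "is_biproduct C A B S \<Longrightarrow> is_biproduct C B A S"
proof -
  assume b: "is_biproduct C A B S"
  obtain i1 i2 p1 p2 where m: "i1 \<in> Hom C A S" "i2 \<in> Hom C B S" "p1 \<in> Hom C S A" "p2 \<in> Hom C S B"
      "comp C p1 i1 = idm C A" "comp C p2 i2 = idm C B" "comp C p2 i1 = mzero C A B"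
      "comp C p1 i2 = mzero C B A" "madd C (comp C i1 p1) (comp C i2 p2) = idm C S"
    using bp_maps[OF b] by blast
  have "madd C (comp C i2 p2) (comp C i1 p1) = madd C (comp C i1 p1) (comp C i2 p2)"
    by (rule add_comm) (use m in \<open>auto simp: hom_iff\<close>)
  then show ?thesis unfolding is_biproduct_def using bp_ob[OF b] m by auto
qed

lemma bp_tri': "is_biproduct C U V S \<Longrightarrow> \<exists>i1 p2. (U, S, V, i1, p2, mzero C V (ShO C U)) \<in> Tri C"
  by (erule bp_maps) (blast intro: bp_tri)

lemma op_mid:
  assumes t: "(X, Y, Z, f, g, h) \<in> Tri C" and b: "is_biproduct C Y A S"
  shows "\<exists>f' Q g' h'. (X, S, Q, f', g', h') \<in> Tri C \<and> is_biproduct C Z A Q"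
proof -
  obtain i1 i2 p1 p2 where m: "i1 \<in> Hom C Y S" "i2 \<in> Hom C A S" "p1 \<in> Hom C S Y" "p2 \<in> Hom C S A"
      "comp C p1 i1 = idm C Y" "comp C p2 i2 = idm C A" "comp C p2 i1 = mzero C Y A"
      "comp C p1 i2 = mzero C A Y" "madd C (comp C i1 p1) (comp C i2 p2) = idm C S"
    using bp_maps[OF b] by blast
  note At = tri_arr[OF t]
  have fh: "f \<in> Hom C X Y" using tri_homs[OF t] by blast
  have t3: "(Y, S, A, i1, p2, mzero C A (ShO C Y)) \<in> Tri C" using bp_tri[OF m] .
  obtain Q g' h' where t2: "(X, S, Q, comp C i1 f, g', h') \<in> Tri C"
    using cone[OF comp_hom[OF fh m(1)]] by blast
  obtain a b where "(Z, Q, A, a, b, comp C (ShM C g) (mzero C A (ShO C Y))) \<in> Tri C"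
    using tr4[OF fh m(1) t t2 t3] by blast
  moreover have "comp C (ShM C g) (mzero C A (ShO C Y)) = mzero C A (ShO C Z)"
    using At m hom_ob by simp
  ultimately have "(Z, Q, A, a, b, mzero C A (ShO C Z)) \<in> Tri C" by simp
  then show ?thesis using split_bp t2 by blast
qed

lemma op_first:
  assumes t: "(X, Y, Z, f, g, h) \<in> Tri C" and b: "is_biproduct C X B S"
  shows "\<exists>f' Q g' h'. (S, Y, Q, f', g', h') \<in> Tri C \<and> is_biproduct C (ShO C B) Z Q"
proof -
  obtain i1 i2 p1 p2 where m: "i1 \<in> Hom C X S" "i2 \<in> Hom C B S" "p1 \<in> Hom C S X" "p2 \<in> Hom C S B"
      "comp C p1 i1 = idm C X" "comp C p2 i2 = idm C B" "comp C p2 i1 = mzero C X B"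
      "comp C p1 i2 = mzero C B X" "madd C (comp C i1 p1) (comp C i2 p2) = idm C S"
    using bp_maps[OF b] by blast
  note At = tri_arr[OF t]
  have fh: "f \<in> Hom C X Y" using tri_homs[OF t] by blast
  have sw: "madd C (comp C i2 p2) (comp C i1 p1) = idm C S"
    using m(9) add_comm[of "comp C i1 p1" "comp C i2 p2"] m(1-4) by (auto simp: hom_iff)
  have t1: "(B, S, X, i2, p1, mzero C X (ShO C B)) \<in> Tri C"
    using bp_tri[OF m(2) m(1) m(4) m(3) m(6) m(5) m(8) m(7) sw] .
  have B: "B \<in> Ob C" using m hom_ob by blast
  have t1': "(S, X, ShO C B, p1, mzero C X (ShO C B), mneg C (ShM C i2)) \<in> Tri C" using rot[OF t1] .
  obtain Q g' h' where t2: "(S, Y, Q, comp C f p1, g', h') \<in> Tri C"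
    using cone[OF comp_hom[OF m(3) fh]] by blast
  obtain a b where "(ShO C B, Q, Z, a, b, comp C (ShM C (mzero C X (ShO C B))) h) \<in> Tri C"
    using tr4[OF m(3) fh t1' t2 t] by blast
  moreover have "comp C (ShM C (mzero C X (ShO C B))) h = mzero C Z (ShO C (ShO C B))"
    using At B by simp
  ultimately have "(ShO C B, Q, Z, a, b, mzero C Z (ShO C (ShO C B))) \<in> Tri C" by simp
  then show ?thesis using split_bp t2 by blast
qed

end

context tri
begin

lemma comp_assoc_r: "Arr f \<Longrightarrow> Arr g \<Longrightarrow> Arr h \<Longrightarrow> cod f = dom g \<Longrightarrow> cod g = dom h \<Longrightarrow>
   comp C (comp C h g) f = comp C h (comp C g f)"
  by (rule comp_assoc[symmetric])

lemma ext: "comp C g f = h \<Longrightarrow> Arr f \<Longrightarrow> Arr g \<Longrightarrow> cod f = dom g \<Longrightarrow> Arr x \<Longrightarrow> cod x = dom f \<Longrightarrow>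
   comp C g (comp C f x) = comp C h x"
  using comp_assoc by metis

lemmas cs = comp_assoc_r comp_add_r comp_add_l

lemma iso_ob: "isomorphic C X Y \<Longrightarrow> X \<in> Ob C \<and> Y \<in> Ob C"
  unfolding isomorphic_def is_iso_def using hom_ob by blast

lemma iso_refl: "X \<in> Ob C \<Longrightarrow> isomorphic C X X"
  unfolding isomorphic_def is_iso_def by (auto intro!: exI[of _ "idm C X"] bexI[of _ "idm C X"] simp: hom_iff)

lemma iso_sym: "isomorphic C X Y \<Longrightarrow> isomorphic C Y X"
  unfolding isomorphic_def is_iso_def by blast

lemma iso_trans: "isomorphic C X Y \<Longrightarrow> isomorphic C Y Z \<Longrightarrow> isomorphic C X Z"
proof -
  assume "isomorphic C X Y" "isomorphic C Y Z"
  then obtain f f' g g' where f: "f \<in> Hom C X Y" "f' \<in> Hom C Y X" "comp C f' f = idm C X" "comp C f f' = idm C Y"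
    and g: "g \<in> Hom C Y Z" "g' \<in> Hom C Z Y" "comp C g' g = idm C Y" "comp C g g' = idm C Z"
    unfolding isomorphic_def is_iso_def by blast
  have A: "Arr f" "dom f = X" "cod f = Y" "Arr f'" "dom f' = Y" "cod f' = X"
     "Arr g" "dom g = Y" "cod g = Z" "Arr g'" "dom g' = Z" "cod g' = Y" using f g by (auto simp: hom_iff)
  have "comp C (comp C f' g') (comp C g f) = idm C X"
    using A ext[OF g(3)] ext[OF f(3)] f g by (simp add: cs)
  moreover have "comp C (comp C g f) (comp C f' g') = idm C Z"
    using A ext[OF g(4)] ext[OF f(4)] f g by (simp add: cs)
  ultimately show ?thesis unfolding isomorphic_def is_iso_def using A
    by (auto intro!: exI[of _ "comp C g f"] bexI[of _ "comp C f' g'"] simp: hom_iff)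
qed

lemma bp_cong:
  assumes "isomorphic C A A'" "isomorphic C B B'" "is_biproduct C A B S" "is_biproduct C A' B' S'"
  shows "isomorphic C S S'"
proof -
  obtain a a' where a: "a \<in> Hom C A A'" "a' \<in> Hom C A' A" "comp C a' a = idm C A" "comp C a a' = idm C A'"
    using assms(1) unfolding isomorphic_def is_iso_def by blast
  obtain b b' where b: "b \<in> Hom C B B'" "b' \<in> Hom C B' B" "comp C b' b = idm C B" "comp C b b' = idm C B'"
    using assms(2) unfolding isomorphic_def is_iso_def by blast
  obtain i1 i2 p1 p2 where m: "i1 \<in> Hom C A S" "i2 \<in> Hom C B S" "p1 \<in> Hom C S A" "p2 \<in> Hom C S B"
      "comp C p1 i1 = idm C A" "comp C p2 i2 = idm C B" "comp C p2 i1 = mzero C A B"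
      "comp C p1 i2 = mzero C B A" "madd C (comp C i1 p1) (comp C i2 p2) = idm C S"
    using bp_maps[OF assms(3)] by blast
  obtain j1 j2 q1 q2 where n: "j1 \<in> Hom C A' S'" "j2 \<in> Hom C B' S'" "q1 \<in> Hom C S' A'" "q2 \<in> Hom C S' B'"
      "comp C q1 j1 = idm C A'" "comp C q2 j2 = idm C B'" "comp C q2 j1 = mzero C A' B'"
      "comp C q1 j2 = mzero C B' A'" "madd C (comp C j1 q1) (comp C j2 q2) = idm C S'"
    using bp_maps[OF assms(4)] by blast
  have O: "A \<in> Ob C" "B \<in> Ob C" "S \<in> Ob C" "A' \<in> Ob C" "B' \<in> Ob C" "S' \<in> Ob C"
    using bp_ob assms by auto
  have H: "Arr a" "dom a = A" "cod a = A'" "Arr a'" "dom a' = A'" "cod a' = A"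
    "Arr b" "dom b = B" "cod b = B'" "Arr b'" "dom b' = B'" "cod b' = B"
    "Arr i1" "dom i1 = A" "cod i1 = S" "Arr i2" "dom i2 = B" "cod i2 = S"
    "Arr p1" "dom p1 = S" "cod p1 = A" "Arr p2" "dom p2 = S" "cod p2 = B"
    "Arr j1" "dom j1 = A'" "cod j1 = S'" "Arr j2" "dom j2 = B'" "cod j2 = S'"
    "Arr q1" "dom q1 = S'" "cod q1 = A'" "Arr q2" "dom q2 = S'" "cod q2 = B'"
    using a b m n by (auto simp: hom_iff)
  define \<phi> where "\<phi> = madd C (comp C j1 (comp C a p1)) (comp C j2 (comp C b p2))"
  define \<psi> where "\<psi> = madd C (comp C i1 (comp C a' q1)) (comp C i2 (comp C b' q2))"
  have "comp C \<psi> \<phi> = idm C S"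
    unfolding \<phi>_def \<psi>_def using H O ext[OF a(3)] ext[OF b(3)] ext[OF n(5)] ext[OF n(6)] ext[OF n(7)] ext[OF n(8)] m(9)
    by (simp add: cs)
  moreover have "comp C \<phi> \<psi> = idm C S'"
    unfolding \<phi>_def \<psi>_def using H O ext[OF a(4)] ext[OF b(4)] ext[OF m(5)] ext[OF m(6)] ext[OF m(7)] ext[OF m(8)] n(9)
    by (simp add: cs)
  moreover have "\<phi> \<in> Hom C S S'" "\<psi> \<in> Hom C S' S" unfolding \<phi>_def \<psi>_def using H by (auto simp: hom_iff)
  ultimately show ?thesis unfolding isomorphic_def is_iso_def by blast
qed

lemma bp_ext:
  assumes "i1 \<in> Hom C A S" "i2 \<in> Hom C B S" "p1 \<in> Hom C S A" "p2 \<in> Hom C S B"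
    "madd C (comp C i1 p1) (comp C i2 p2) = idm C S"
    "x \<in> Hom C W S" "y \<in> Hom C W S" "comp C p1 x = comp C p1 y" "comp C p2 x = comp C p2 y"
  shows "x = y"
proof -
  have H: "Arr i1" "dom i1 = A" "cod i1 = S" "Arr i2" "dom i2 = B" "cod i2 = S"
    "Arr p1" "dom p1 = S" "cod p1 = A" "Arr p2" "dom p2 = S" "cod p2 = B"
    "Arr x" "dom x = W" "cod x = S" "Arr y" "dom y = W" "cod y = S" using assms by (auto simp: hom_iff)
  have "x = comp C (madd C (comp C i1 p1) (comp C i2 p2)) x" using assms(5) H by simp
  also have "\<dots> = madd C (comp C i1 (comp C p1 x)) (comp C i2 (comp C p2 x))" using H by (simp add: cs)
  also have "\<dots> = madd C (comp C i1 (comp C p1 y)) (comp C i2 (comp C p2 y))" using assms(8,9) by simp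
  also have "\<dots> = comp C (madd C (comp C i1 p1) (comp C i2 p2)) y" using H by (simp add: cs)
  also have "\<dots> = y" using assms(5) H by simp
  finally show ?thesis .
qed

lemma bp_assoc:
  assumes "is_biproduct C A B S1" "is_biproduct C S1 R S" "is_biproduct C B R T1"
  shows "is_biproduct C A T1 S"
proof -
  obtain i1 i2 p1 p2 where m: "i1 \<in> Hom C A S1" "i2 \<in> Hom C B S1" "p1 \<in> Hom C S1 A" "p2 \<in> Hom C S1 B"
      "comp C p1 i1 = idm C A" "comp C p2 i2 = idm C B" "comp C p2 i1 = mzero C A B"
      "comp C p1 i2 = mzero C B A" "madd C (comp C i1 p1) (comp C i2 p2) = idm C S1"
    using bp_maps[OF assms(1)] by blast
  obtain k1 k2 r1 r2 where k: "k1 \<in> Hom C S1 S" "k2 \<in> Hom C R S" "r1 \<in> Hom C S S1" "r2 \<in> Hom C S R"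
      "comp C r1 k1 = idm C S1" "comp C r2 k2 = idm C R" "comp C r2 k1 = mzero C S1 R"
      "comp C r1 k2 = mzero C R S1" "madd C (comp C k1 r1) (comp C k2 r2) = idm C S"
    using bp_maps[OF assms(2)] by blast
  obtain l1 l2 n1 n2 where l: "l1 \<in> Hom C B T1" "l2 \<in> Hom C R T1" "n1 \<in> Hom C T1 B" "n2 \<in> Hom C T1 R"
      "comp C n1 l1 = idm C B" "comp C n2 l2 = idm C R" "comp C n2 l1 = mzero C B R"
      "comp C n1 l2 = mzero C R B" "madd C (comp C l1 n1) (comp C l2 n2) = idm C T1"
    using bp_maps[OF assms(3)] by blast
  have O: "A \<in> Ob C" "B \<in> Ob C" "S1 \<in> Ob C" "R \<in> Ob C" "S \<in> Ob C" "T1 \<in> Ob C"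
    using bp_ob assms by auto
  have H: "Arr i1" "dom i1 = A" "cod i1 = S1" "Arr i2" "dom i2 = B" "cod i2 = S1"
    "Arr p1" "dom p1 = S1" "cod p1 = A" "Arr p2" "dom p2 = S1" "cod p2 = B"
    "Arr k1" "dom k1 = S1" "cod k1 = S" "Arr k2" "dom k2 = R" "cod k2 = S"
    "Arr r1" "dom r1 = S" "cod r1 = S1" "Arr r2" "dom r2 = S" "cod r2 = R"
    "Arr l1" "dom l1 = B" "cod l1 = T1" "Arr l2" "dom l2 = R" "cod l2 = T1"
    "Arr n1" "dom n1 = T1" "cod n1 = B" "Arr n2" "dom n2 = T1" "cod n2 = R"
    using m k l by (auto simp: hom_iff)
  note E = ext[OF m(5)] ext[OF m(6)] ext[OF m(7)] ext[OF m(8)] ext[OF k(5)] ext[OF k(6)] ext[OF k(7)] ext[OF k(8)]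
    ext[OF l(5)] ext[OF l(6)] ext[OF l(7)] ext[OF l(8)] m(5-8) k(5-8) l(5-8)
  define I1 where "I1 = comp C k1 i1"
  define P1 where "P1 = comp C p1 r1"
  define I2 where "I2 = madd C (comp C k1 (comp C i2 n1)) (comp C k2 n2)"
  define P2 where "P2 = madd C (comp C l1 (comp C p2 r1)) (comp C l2 r2)"
  have HI: "I1 \<in> Hom C A S" "P1 \<in> Hom C S A" "I2 \<in> Hom C T1 S" "P2 \<in> Hom C S T1"
    unfolding I1_def P1_def I2_def P2_def using H by (auto simp: hom_iff)
  have e1: "comp C P1 I1 = idm C A" unfolding I1_def P1_def using H O E by (simp add: cs)
  have e3: "comp C P2 I1 = mzero C A T1" unfolding I1_def P2_def using H O E by (simp add: cs)
  have e4: "comp C P1 I2 = mzero C T1 A" unfolding I2_def P1_def using H O E by (simp add: cs)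
  have e2: "comp C P2 I2 = idm C T1"
  proof (rule bp_ext[OF l(1-4) l(9)])
    show "comp C P2 I2 \<in> Hom C T1 T1" "idm C T1 \<in> Hom C T1 T1" using HI O by (auto simp: hom_iff)
    show "comp C n1 (comp C P2 I2) = comp C n1 (idm C T1)" unfolding I2_def P2_def using H O E by (simp add: cs)
    show "comp C n2 (comp C P2 I2) = comp C n2 (idm C T1)" unfolding I2_def P2_def using H O E by (simp add: cs)
  qed
  have e5: "madd C (comp C I1 P1) (comp C I2 P2) = idm C S"
  proof (rule bp_ext[OF k(1-4) k(9)])
    show "madd C (comp C I1 P1) (comp C I2 P2) \<in> Hom C S S" "idm C S \<in> Hom C S S" using HI O by (auto simp: hom_iff)
    show "comp C r2 (madd C (comp C I1 P1) (comp C I2 P2)) = comp C r2 (idm C S)"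
      unfolding I1_def P1_def I2_def P2_def using H O E by (simp add: cs)
    show "comp C r1 (madd C (comp C I1 P1) (comp C I2 P2)) = comp C r1 (idm C S)"
    proof (rule bp_ext[OF m(1-4) m(9)])
      show "comp C r1 (madd C (comp C I1 P1) (comp C I2 P2)) \<in> Hom C S S1" "comp C r1 (idm C S) \<in> Hom C S S1"
        using HI H O by (auto simp: hom_iff)
      show "comp C p1 (comp C r1 (madd C (comp C I1 P1) (comp C I2 P2))) = comp C p1 (comp C r1 (idm C S))"
        unfolding I1_def P1_def I2_def P2_def using H O E by (simp add: cs)
      show "comp C p2 (comp C r1 (madd C (comp C I1 P1) (comp C I2 P2))) = comp C p2 (comp C r1 (idm C S))"
        unfolding I1_def P1_def I2_def P2_def using H O E by (simp add: cs)
    qed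
  qed
  show ?thesis unfolding is_biproduct_def using O HI e1 e2 e3 e4 e5 by blast
qed

lemma bp_zero: "is_biproduct C X z Q \<Longrightarrow> zero_object C z \<Longrightarrow> isomorphic C X Q"
proof -
  assume b: "is_biproduct C X z Q" and z: "zero_object C z"
  obtain i1 i2 p1 p2 where m: "i1 \<in> Hom C X Q" "i2 \<in> Hom C z Q" "p1 \<in> Hom C Q X" "p2 \<in> Hom C Q z"
      "comp C p1 i1 = idm C X" "comp C p2 i2 = idm C z" "comp C p2 i1 = mzero C X z"
      "comp C p1 i2 = mzero C z X" "madd C (comp C i1 p1) (comp C i2 p2) = idm C Q"
    using bp_maps[OF b] by blast
  have O: "X \<in> Ob C" "z \<in> Ob C" "Q \<in> Ob C" using bp_ob b by auto
  have H: "Arr i1" "dom i1 = X" "cod i1 = Q" "Arr i2" "dom i2 = z" "cod i2 = Q"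
    "Arr p1" "dom p1 = Q" "cod p1 = X" "Arr p2" "dom p2 = Q" "cod p2 = z" using m by (auto simp: hom_iff)
  have "comp C i1 p1 = idm C Q"
  proof (rule bp_ext[OF m(1-4) m(9)])
    show "comp C i1 p1 \<in> Hom C Q Q" "idm C Q \<in> Hom C Q Q" using H O by (auto simp: hom_iff)
    show "comp C p1 (comp C i1 p1) = comp C p1 (idm C Q)" using H O ext[OF m(5)] by simp
    have "comp C p2 (comp C i1 p1) \<in> Hom C Q z" "comp C p2 (idm C Q) \<in> Hom C Q z" using H O by (auto simp: hom_iff)
    then show "comp C p2 (comp C i1 p1) = comp C p2 (idm C Q)" using to_zero[OF z] by metis
  qed
  then show ?thesis unfolding isomorphic_def is_iso_def using m by blast
qed

definition bpc :: "'o \<Rightarrow> 'o \<Rightarrow> 'o" where "bpc A B = (SOME S. is_biproduct C A B S)"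

lemma bpc: "A \<in> Ob C \<Longrightarrow> B \<in> Ob C \<Longrightarrow> is_biproduct C A B (bpc A B)"
proof -
  assume "A \<in> Ob C" "B \<in> Ob C"
  then have "\<exists>S. is_biproduct C A B S" using additiveC unfolding additive_def by blast
  then show ?thesis unfolding bpc_def by (rule someI_ex)
qed

lemma bpc_ob[simp]: "A \<in> Ob C \<Longrightarrow> B \<in> Ob C \<Longrightarrow> bpc A B \<in> Ob C"
  using bpc bp_ob by blast

lemma bp_uniq: "is_biproduct C A B S \<Longrightarrow> is_biproduct C A B S' \<Longrightarrow> isomorphic C S S'"
  using bp_cong iso_refl bp_ob by metis

end

lemma delta_fsupp: "x \<in> S \<Longrightarrow> delta x \<in> fsupp S"
proof -
  assume "x \<in> S"
  moreover have "{y. delta x y \<noteq> 0} = {x}" by (auto simp: delta_def)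
  ultimately show ?thesis unfolding fsupp_def by auto
qed

lemma fsupp_zero: "(\<lambda>y. 0) \<in> fsupp S" unfolding fsupp_def by auto

lemma fsupp_lin: "a \<in> fsupp S \<Longrightarrow> u \<in> fsupp S \<Longrightarrow> (\<lambda>y. c * a y + u y) \<in> fsupp S"
proof -
  assume a: "a \<in> fsupp S" and u: "u \<in> fsupp S"
  have "{y. c * a y + u y \<noteq> 0} \<subseteq> {y. a y \<noteq> 0} \<union> {y. u y \<noteq> 0}" by auto
  with a u show ?thesis unfolding fsupp_def by (auto intro: finite_subset)
qed

lemma fsupp_qspan: "A \<subseteq> fsupp S \<Longrightarrow> qspan A \<subseteq> fsupp S"
proof
  fix v assume A: "A \<subseteq> fsupp S" and v: "v \<in> qspan A"
  from v show "v \<in> fsupp S"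
  proof (induct rule: qs_induct)
    case base then show ?case by (rule fsupp_zero)
  next
    case (step c a u) then show ?case using A by (intro fsupp_lin) auto
  qed
qed

lemma fsupp_add: "a \<in> fsupp S \<Longrightarrow> u \<in> fsupp S \<Longrightarrow> (\<lambda>y. a y + u y) \<in> fsupp S"
  using fsupp_lin[of a S u 1] by simp
lemma fsupp_smult: "a \<in> fsupp S \<Longrightarrow> (\<lambda>y. c * a y) \<in> fsupp S"
  using fsupp_lin[of a S "\<lambda>y. 0" c] fsupp_zero[of S] by simp
lemma fsupp_diff: "a \<in> fsupp S \<Longrightarrow> u \<in> fsupp S \<Longrightarrow> (\<lambda>y. a y - u y) \<in> fsupp S"
  using fsupp_lin[of u S a "-1"] by simp

lemma fsupp_mono: "S \<subseteq> S' \<Longrightarrow> fsupp S \<subseteq> fsupp S'" unfolding fsupp_def by auto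

lemma fsupp_expand: "v \<in> fsupp S \<Longrightarrow> v = (\<lambda>y. \<Sum>x\<in>{x. v x \<noteq> 0}. v x * delta x y)"
proof
  fix y assume v: "v \<in> fsupp S"
  then have fin: "finite {x. v x \<noteq> 0}" unfolding fsupp_def by auto
  have "(\<Sum>x\<in>{x. v x \<noteq> 0}. v x * delta x y) = (\<Sum>x\<in>{x. v x \<noteq> 0}. if x = y then v x else 0)"
    by (rule sum.cong) (auto simp: delta_def)
  also have "\<dots> = v y" using fin by (simp add: sum.delta)
  finally show "v y = (\<Sum>x\<in>{x. v x \<noteq> 0}. v x * delta x y)" by simp
qed

lemma fsupp_in_qspan: "v \<in> fsupp S \<Longrightarrow> (\<And>x. x \<in> S \<Longrightarrow> delta x \<in> qspan A) \<Longrightarrow> v \<in> qspan A"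
proof -
  assume v: "v \<in> fsupp S" and d: "\<And>x. x \<in> S \<Longrightarrow> delta x \<in> qspan A"
  have "(\<lambda>y. \<Sum>x\<in>{x. v x \<noteq> 0}. v x * delta x y) \<in> qspan A"
  proof (rule qs_sum)
    fix x assume "x \<in> {x. v x \<noteq> 0}"
    then have "x \<in> S" using v unfolding fsupp_def by auto
    then show "(\<lambda>y. v x * delta x y) \<in> qspan A" using d qs_smult by blast
  qed
  then show ?thesis using fsupp_expand[OF v] by simp
qed

lemma rels_fsupp: "groth_rels C S \<subseteq> fsupp S"
  unfolding groth_rels_def by (auto intro!: fsupp_diff delta_fsupp)

lemma R_fsupp: "qspan (groth_rels C S) \<subseteq> fsupp S"
  using fsupp_qspan[OF rels_fsupp] .

lemma rels_mono: "S \<subseteq> S' \<Longrightarrow> groth_rels C S \<subseteq> groth_rels C S'"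
  unfolding groth_rels_def by blast

lemma cos_mem: "v \<in> fsupp S \<Longrightarrow> v \<in> groth_coset C S v"
  unfolding groth_coset_def using qs_zero by simp

lemma cos_eq: "(\<lambda>y. v y - w y) \<in> qspan (groth_rels C S) \<Longrightarrow> groth_coset C S v = groth_coset C S w"
proof -
  assume d: "(\<lambda>y. v y - w y) \<in> qspan (groth_rels C S)"
  have "(\<lambda>y. u y - v y) \<in> qspan (groth_rels C S) \<longleftrightarrow> (\<lambda>y. u y - w y) \<in> qspan (groth_rels C S)" for u
  proof
    assume "(\<lambda>y. u y - v y) \<in> qspan (groth_rels C S)"
    from qs_add[OF this d] show "(\<lambda>y. u y - w y) \<in> qspan (groth_rels C S)" by simp
  next
    assume "(\<lambda>y. u y - w y) \<in> qspan (groth_rels C S)"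
    from qs_diff[OF this d] show "(\<lambda>y. u y - v y) \<in> qspan (groth_rels C S)" by simp
  qed
  then show ?thesis unfolding groth_coset_def by blast
qed

lemma cos_eqD: "v \<in> fsupp S \<Longrightarrow> groth_coset C S v = groth_coset C S w \<Longrightarrow> (\<lambda>y. v y - w y) \<in> qspan (groth_rels C S)"
  using cos_mem[of v S C] unfolding groth_coset_def by auto

lemma cos_some: "v \<in> fsupp S \<Longrightarrow> (SOME u. u \<in> groth_coset C S v) \<in> groth_coset C S v"
  using cos_mem by (metis someI_ex)

lemma cos_some_eq: "v \<in> fsupp S \<Longrightarrow> (\<lambda>y. (SOME u. u \<in> groth_coset C S v) y - v y) \<in> qspan (groth_rels C S)"
  using cos_some[of v S C] unfolding groth_coset_def by auto

lemma gq_add_cos: "v \<in> fsupp S \<Longrightarrow> w \<in> fsupp S \<Longrightarrow>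
   gq_add C S (groth_coset C S v) (groth_coset C S w) = groth_coset C S (\<lambda>y. v y + w y)"
  unfolding gq_add_def
proof (rule cos_eq)
  assume v: "v \<in> fsupp S" and w: "w \<in> fsupp S"
  from qs_add[OF cos_some_eq[OF v] cos_some_eq[OF w]]
  show "(\<lambda>y. (SOME u. u \<in> groth_coset C S v) y + (SOME u. u \<in> groth_coset C S w) y - (v y + w y)) \<in> qspan (groth_rels C S)"
    by (simp add: algebra_simps)
qed

lemma gq_smult_cos: "v \<in> fsupp S \<Longrightarrow> gq_smult C S c (groth_coset C S v) = groth_coset C S (\<lambda>y. c * v y)"
  unfolding gq_smult_def
proof (rule cos_eq)
  assume v: "v \<in> fsupp S"
  from qs_smult[OF cos_some_eq[OF v], of c]
  show "(\<lambda>y. c * (SOME u. u \<in> groth_coset C S v) y - c * v y) \<in> qspan (groth_rels C S)"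
    by (simp add: algebra_simps)
qed

lemma gq_incl_cos: "D \<subseteq> Ob C \<Longrightarrow> v \<in> fsupp D \<Longrightarrow> gq_incl C D (groth_coset C D v) = groth_coset C (Ob C) v"
  unfolding gq_incl_def
proof (rule cos_eq)
  assume D: "D \<subseteq> Ob C" and v: "v \<in> fsupp D"
  have "qspan (groth_rels C D) \<subseteq> qspan (groth_rels C (Ob C))" using qs_mono rels_mono[OF D] by blast
  then show "(\<lambda>y. (SOME u. u \<in> groth_coset C D v) y - v y) \<in> qspan (groth_rels C (Ob C))"
    using cos_some_eq[OF v] by blast
qed

context tri
begin

declare iso_trans[trans]

fun obj :: "'o list \<Rightarrow> 'o" where
  "obj [] = z0"
| "obj (x # xs) = bpc x (obj xs)"

lemma obj_ob[simp]: "set L \<subseteq> Ob C \<Longrightarrow> obj L \<in> Ob C"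
  by (induct L) auto

lemma bpc_zero_l: "Y \<in> Ob C \<Longrightarrow> isomorphic C Y (bpc z0 Y)"
  using bp_zero[OF bp_swap[OF bpc] z0] by simp

lemma bpc_zero_r: "Y \<in> Ob C \<Longrightarrow> isomorphic C Y (bpc Y z0)"
  using bp_zero[OF bpc z0] by simp

lemma bpc_cong: "isomorphic C A A' \<Longrightarrow> isomorphic C B B' \<Longrightarrow> isomorphic C (bpc A B) (bpc A' B')"
proof -
  assume a: "isomorphic C A A'" "isomorphic C B B'"
  then have O: "A \<in> Ob C" "A' \<in> Ob C" "B \<in> Ob C" "B' \<in> Ob C" using iso_ob by auto
  show ?thesis using bp_cong[OF a bpc[OF O(1,3)] bpc[OF O(2,4)]] .
qed

lemma bpc_assoc: "A \<in> Ob C \<Longrightarrow> B \<in> Ob C \<Longrightarrow> R \<in> Ob C \<Longrightarrow>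
  isomorphic C (bpc (bpc A B) R) (bpc A (bpc B R))"
  using bp_uniq[OF bp_assoc[OF bpc[of A B] bpc[of "bpc A B" R] bpc[of B R]] bpc[of A "bpc B R"]] by simp

lemma bpc_comm: "A \<in> Ob C \<Longrightarrow> B \<in> Ob C \<Longrightarrow> isomorphic C (bpc A B) (bpc B A)"
  using bp_uniq[OF bp_swap[OF bpc[of A B]] bpc[of B A]] by simp

lemma bpc_lcomm: "A \<in> Ob C \<Longrightarrow> B \<in> Ob C \<Longrightarrow> R \<in> Ob C \<Longrightarrow>
  isomorphic C (bpc A (bpc B R)) (bpc B (bpc A R))"
proof -
  assume O: "A \<in> Ob C" "B \<in> Ob C" "R \<in> Ob C"
  have "isomorphic C (bpc A (bpc B R)) (bpc (bpc A B) R)" using bpc_assoc[OF O] iso_sym by blast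
  also have "isomorphic C (bpc (bpc A B) R) (bpc (bpc B A) R)"
    using bpc_cong[OF bpc_comm[OF O(1,2)] iso_refl[OF O(3)]] .
  finally have "isomorphic C (bpc A (bpc B R)) (bpc (bpc B A) R)" .
  also have "isomorphic C (bpc (bpc B A) R) (bpc B (bpc A R))" using bpc_assoc O by blast
  finally show ?thesis .
qed


lemma obj_app: "set xs \<subseteq> Ob C \<Longrightarrow> set ys \<subseteq> Ob C \<Longrightarrow> isomorphic C (obj (xs @ ys)) (bpc (obj xs) (obj ys))"
proof (induct xs)
  case Nil then show ?case using bpc_zero_l by simp
next
  case (Cons x xs)
  then have O: "x \<in> Ob C" "obj xs \<in> Ob C" "obj ys \<in> Ob C" "set xs \<subseteq> Ob C" by auto
  have "isomorphic C (obj ((x # xs) @ ys)) (bpc x (bpc (obj xs) (obj ys)))"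
    using bpc_cong[OF iso_refl[OF O(1)] Cons(1)[OF O(4) Cons(3)]] by simp
  also have "isomorphic C (bpc x (bpc (obj xs) (obj ys))) (bpc (bpc x (obj xs)) (obj ys))"
    using iso_sym[OF bpc_assoc[OF O(1-3)]] .
  finally show ?case by simp
qed

lemma obj_cong_app: "set xs \<subseteq> Ob C \<Longrightarrow> set ys \<subseteq> Ob C \<Longrightarrow> set xs' \<subseteq> Ob C \<Longrightarrow> set ys' \<subseteq> Ob C \<Longrightarrow>
  isomorphic C (obj xs) (obj xs') \<Longrightarrow> isomorphic C (obj ys) (obj ys') \<Longrightarrow> isomorphic C (obj (xs @ ys)) (obj (xs' @ ys'))"
proof -
  assume a: "set xs \<subseteq> Ob C" "set ys \<subseteq> Ob C" "set xs' \<subseteq> Ob C" "set ys' \<subseteq> Ob C"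
    "isomorphic C (obj xs) (obj xs')" "isomorphic C (obj ys) (obj ys')"
  have "isomorphic C (obj (xs @ ys)) (bpc (obj xs) (obj ys))" using obj_app a by blast
  also have "isomorphic C (bpc (obj xs) (obj ys)) (bpc (obj xs') (obj ys'))" using bpc_cong a by blast
  also have "isomorphic C (bpc (obj xs') (obj ys')) (obj (xs' @ ys'))" using obj_app a iso_sym by blast
  finally show ?thesis .
qed

lemma obj_swap: "set xs \<subseteq> Ob C \<Longrightarrow> set ys \<subseteq> Ob C \<Longrightarrow> x \<in> Ob C \<Longrightarrow>
  isomorphic C (obj (xs @ x # ys)) (obj (x # xs @ ys))"
proof (induct xs)
  case Nil then show ?case using iso_refl by simp
next
  case (Cons a xs)
  then have O: "a \<in> Ob C" "x \<in> Ob C" "obj (xs @ ys) \<in> Ob C" by auto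
  have "isomorphic C (obj ((a # xs) @ x # ys)) (bpc a (obj (x # xs @ ys)))"
    using bpc_cong[OF iso_refl[OF O(1)] Cons(1)] Cons by simp
  also have "isomorphic C (bpc a (obj (x # xs @ ys))) (bpc x (bpc a (obj (xs @ ys))))"
    using bpc_lcomm[OF O] by simp
  finally show ?case by simp
qed

lemma obj_perm: "set xs \<subseteq> Ob C \<Longrightarrow> set ys \<subseteq> Ob C \<Longrightarrow> (\<forall>y. count_list xs y = count_list ys y) \<Longrightarrow>
  isomorphic C (obj xs) (obj ys)"
proof (induct xs arbitrary: ys)
  case Nil
  have "ys = []"
  proof (rule ccontr)
    assume "ys \<noteq> []" then obtain y ys' where "ys = y # ys'" by (cases ys) auto
    then show False using Nil(3)[rule_format, of y] by simp
  qed
  then show ?case using iso_refl by simp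
next
  case (Cons x xs)
  have "count_list ys x > 0" using Cons(4)[rule_format, of x] by simp
  then have "x \<in> set ys" using count_list_0_iff[of ys x] by auto
  then obtain ys1 ys2 where ys: "ys = ys1 @ x # ys2" by (meson split_list)
  have O: "x \<in> Ob C" "set xs \<subseteq> Ob C" "set (ys1 @ ys2) \<subseteq> Ob C" "set ys1 \<subseteq> Ob C" "set ys2 \<subseteq> Ob C"
    using Cons ys by auto
  have "\<forall>y. count_list xs y = count_list (ys1 @ ys2) y"
  proof
    fix y show "count_list xs y = count_list (ys1 @ ys2) y" using Cons(4)[rule_format, of y] ys by (cases "y = x") auto
  qed
  then have ih: "isomorphic C (obj xs) (obj (ys1 @ ys2))" using Cons(1) O by blast
  have "isomorphic C (obj (x # xs)) (obj (x # ys1 @ ys2))"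
    using bpc_cong[OF iso_refl[OF O(1)] ih] by simp
  also have "isomorphic C (obj (x # ys1 @ ys2)) (obj ys)"
    using iso_sym[OF obj_swap[OF O(4,5,1)]] ys by simp
  finally show ?case .
qed

definition rep :: "nat \<Rightarrow> 'o list \<Rightarrow> 'o list" where "rep k L = concat (replicate k L)"

lemma rep_set: "set (rep k L) \<subseteq> set L" unfolding rep_def by auto

lemma rep_count: "count_list (rep k L) y = k * count_list L y"
  unfolding rep_def by (induct k) auto

lemma rep_iso: "set L1 \<subseteq> Ob C \<Longrightarrow> set L2 \<subseteq> Ob C \<Longrightarrow> isomorphic C (obj L1) (obj L2) \<Longrightarrow>
   isomorphic C (obj (rep k L1)) (obj (rep k L2))"
proof (induct k)
  case 0 then show ?case by (simp add: rep_def iso_refl)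
next
  case (Suc k)
  have "rep (Suc k) L1 = L1 @ rep k L1" "rep (Suc k) L2 = L2 @ rep k L2" unfolding rep_def by auto
  moreover have "set (rep k L1) \<subseteq> Ob C" "set (rep k L2) \<subseteq> Ob C" using rep_set Suc by blast+
  ultimately show ?case using obj_cong_app Suc by simp
qed

lemma obj_pair: "is_biproduct C A B S \<Longrightarrow> isomorphic C (obj [A, B]) (obj [S])"
proof -
  assume b: "is_biproduct C A B S"
  have O: "A \<in> Ob C" "B \<in> Ob C" "S \<in> Ob C" using bp_ob b by auto
  have "isomorphic C (obj [A, B]) (bpc A B)" using bpc_cong[OF iso_refl[OF O(1)] iso_sym[OF bpc_zero_r[OF O(2)]]] by simp
  also have "isomorphic C (bpc A B) S" using bp_uniq[OF bpc[OF O(1,2)] b] .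
  also have "isomorphic C S (obj [S])" using bpc_zero_r[OF O(3)] by simp
  finally show ?thesis .
qed

end

locale mainloc = tri +
  fixes H
  assumes HS: "gq_subspace C (Ob C) H"
begin

definition Hp where
  "Hp = {v \<in> fsupp (Ob C). groth_coset C (Ob C) v \<in> H}"
definition D where
  "D = {X \<in> Ob C. delta X \<in> Hp}"
abbreviation RG where "RG \<equiv> qspan (groth_rels C (Ob C))"
abbreviation RD where "RD \<equiv> qspan (groth_rels C D)"

lemma D_sub: "D \<subseteq> Ob C" unfolding D_def by auto

lemma Hp_zero: "(\<lambda>y. 0) \<in> Hp"
  using HS fsupp_zero unfolding Hp_def gq_subspace_def by auto

lemma Hp_lin: "a \<in> Hp \<Longrightarrow> u \<in> Hp \<Longrightarrow> (\<lambda>y. c * a y + u y) \<in> Hp"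
proof -
  assume a: "a \<in> Hp" and u: "u \<in> Hp"
  have af: "a \<in> fsupp (Ob C)" and uf: "u \<in> fsupp (Ob C)" using a u unfolding Hp_def by auto
  have "gq_smult C (Ob C) c (groth_coset C (Ob C) a) \<in> H" using HS a unfolding gq_subspace_def Hp_def by auto
  then have "groth_coset C (Ob C) (\<lambda>y. c * a y) \<in> H" using gq_smult_cos[OF af, where C=C] by simp
  moreover have "(\<lambda>y. c * a y) \<in> fsupp (Ob C)" using fsupp_smult[OF af] .
  ultimately have "gq_add C (Ob C) (groth_coset C (Ob C) (\<lambda>y. c * a y)) (groth_coset C (Ob C) u) \<in> H"
    using HS u unfolding gq_subspace_def Hp_def by auto
  then have "groth_coset C (Ob C) (\<lambda>y. c * a y + u y) \<in> H"
    using gq_add_cos[OF fsupp_smult[OF af] uf, where C=C] by simp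
  then show ?thesis unfolding Hp_def using fsupp_lin[OF af uf] by auto
qed

lemma Hp_add: "a \<in> Hp \<Longrightarrow> u \<in> Hp \<Longrightarrow> (\<lambda>y. a y + u y) \<in> Hp" using Hp_lin[of a u 1] by simp
lemma Hp_smult: "a \<in> Hp \<Longrightarrow> (\<lambda>y. c * a y) \<in> Hp" using Hp_lin[of a "\<lambda>y. 0" c] Hp_zero by simp

lemma Hp_qspan: "A \<subseteq> Hp \<Longrightarrow> qspan A \<subseteq> Hp"
proof
  fix v assume A: "A \<subseteq> Hp" and v: "v \<in> qspan A"
  from v show "v \<in> Hp"
  proof (induct rule: qs_induct)
    case base then show ?case by (rule Hp_zero)
  next
    case (step c a u) then show ?case using A Hp_lin by blast
  qed
qed

lemma RG_Hp: "RG \<subseteq> Hp"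
proof
  fix r assume r: "r \<in> RG"
  have rf: "r \<in> fsupp (Ob C)" using R_fsupp r by blast
  have "groth_coset C (Ob C) r = groth_coset C (Ob C) (\<lambda>y. 0)" by (rule cos_eq) (use r in simp)
  moreover have "groth_coset C (Ob C) (\<lambda>y. 0) \<in> H" using HS unfolding gq_subspace_def by auto
  ultimately show "r \<in> Hp" unfolding Hp_def using rf by auto
qed

lemma Hp_cong: "v \<in> Hp \<Longrightarrow> (\<lambda>y. w y - v y) \<in> RG \<Longrightarrow> w \<in> Hp"
  using Hp_add[of "\<lambda>y. w y - v y" v] RG_Hp by auto

lemma inD: "X \<in> Ob C \<Longrightarrow> (\<lambda>y. delta X y - v y) \<in> RG \<Longrightarrow> v \<in> Hp \<Longrightarrow> X \<in> D"
  unfolding D_def using Hp_cong by blast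

lemma relT: "(X, Y, Z, f, g, h) \<in> Tri C \<Longrightarrow> X \<in> S \<Longrightarrow> Y \<in> S \<Longrightarrow> Z \<in> S \<Longrightarrow>
   (\<lambda>y. delta Y y - delta X y - delta Z y) \<in> groth_rels C S"
  unfolding groth_rels_def by blast

lemma relI: "isomorphic C X X' \<Longrightarrow> X \<in> S \<Longrightarrow> X' \<in> S \<Longrightarrow> (\<lambda>y. delta X y - delta X' y) \<in> groth_rels C S"
  unfolding groth_rels_def by blast

lemma relT_G: "(X, Y, Z, f, g, h) \<in> Tri C \<Longrightarrow> (\<lambda>y. delta Y y - delta X y - delta Z y) \<in> RG"
  using relT[of X Y Z f g h "Ob C"] tri_arr[of X Y Z f g h] qs_base by blast

lemma bp_RG: "is_biproduct C A B S \<Longrightarrow> (\<lambda>y. delta S y - delta A y - delta B y) \<in> RG"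
  using bp_tri' relT_G by blast

lemma z_RG: "delta z0 \<in> RG"
proof -
  have "(\<lambda>y. delta z0 y - delta z0 y - delta z0 y) \<in> RG" using relT_G[OF id_tri[OF z0_ob]] .
  from qs_neg[OF this] show ?thesis by simp
qed

lemma sh_RG: "X \<in> Ob C \<Longrightarrow> (\<lambda>y. delta X y + delta (ShO C X) y) \<in> RG"
proof -
  assume X: "X \<in> Ob C"
  have "(\<lambda>y. delta z0 y - delta X y - delta (ShO C X) y) \<in> RG" using relT_G[OF rot[OF id_tri[OF X]]] .
  from qs_diff[OF z_RG this] show ?thesis by simp
qed

lemma bpsh_D: "is_biproduct C U (ShO C U) S \<Longrightarrow> S \<in> D"
proof -
  assume b: "is_biproduct C U (ShO C U) S"
  have O: "U \<in> Ob C" "S \<in> Ob C" using bp_ob b by auto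
  have "(\<lambda>y. (delta S y - delta U y - delta (ShO C U) y) + (delta U y + delta (ShO C U) y)) \<in> RG"
    using qs_add[OF bp_RG[OF b] sh_RG[OF O(1)]] .
  then have "(\<lambda>y. delta S y - 0) \<in> RG" by simp
  then show ?thesis using inD[OF O(2) _ Hp_zero] by blast
qed

lemma bpsh_D': "is_biproduct C (ShO C U) U S \<Longrightarrow> S \<in> D"
  using bpsh_D bp_swap by blast

lemma z0_D: "z0 \<in> D" using inD[of z0 "\<lambda>y. 0"] z_RG Hp_zero by simp

lemma z_RD: "delta z0 \<in> RD"
proof -
  have "(\<lambda>y. delta z0 y - delta z0 y - delta z0 y) \<in> RD"
    using relT[OF id_tri[OF z0_ob]] z0_D qs_base by blast
  from qs_neg[OF this] show ?thesis by simp
qed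

lemma iso_D: "X \<in> D \<Longrightarrow> isomorphic C X Y \<Longrightarrow> Y \<in> D"
proof -
  assume X: "X \<in> D" and i: "isomorphic C X Y"
  have O: "X \<in> Ob C" "Y \<in> Ob C" using iso_ob i by auto
  have "(\<lambda>y. delta X y - delta Y y) \<in> RG" using relI[OF i O] qs_base by blast
  from qs_neg[OF this] have "(\<lambda>y. delta Y y - delta X y) \<in> RG" by simp
  moreover have "delta X \<in> Hp" using X unfolding D_def by blast
  ultimately show ?thesis by (rule inD[OF O(2)])
qed

lemma bp_D: "A \<in> D \<Longrightarrow> B \<in> D \<Longrightarrow> is_biproduct C A B S \<Longrightarrow> S \<in> D \<and> (\<lambda>y. delta S y - delta A y - delta B y) \<in> groth_rels C D"
proof -
  assume A: "A \<in> D" and B: "B \<in> D" and b: "is_biproduct C A B S"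
  have O: "S \<in> Ob C" using bp_ob b by auto
  have "(\<lambda>y. delta S y - (delta A y + delta B y)) \<in> RG" using bp_RG[OF b] by (simp add: algebra_simps)
  moreover have "(\<lambda>y. delta A y + delta B y) \<in> Hp" using Hp_add A B unfolding D_def by blast
  ultimately have S: "S \<in> D" by (rule inD[OF O])
  obtain i1 p2 where "(A, S, B, i1, p2, mzero C B (ShO C A)) \<in> Tri C" using bp_tri'[OF b] by blast
  then show ?thesis using relT A B S by blast
qed

lemma dense: "dense_subcategory C D"
  unfolding dense_subcategory_def triangulated_subcategory_def
proof (intro conjI ballI allI impI)
  show "D \<subseteq> Ob C" by (rule D_sub)
  show "D \<noteq> {}" using z0_D by blast
  show "Y \<in> D" if "X \<in> D" "isomorphic C X Y" for X Y using iso_D that by blast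
  show "ShO C X \<in> D" if X: "X \<in> D" for X
  proof -
    have O: "X \<in> Ob C" using X D_sub by blast
    have "(\<lambda>y. delta (ShO C X) y - (- delta X y)) \<in> RG" using sh_RG[OF O] by (simp add: algebra_simps)
    moreover have "(\<lambda>y. - delta X y) \<in> Hp" using Hp_smult[of "delta X" "-1"] X unfolding D_def by simp
    ultimately show ?thesis by (rule inD[OF ob_sh[OF O]])
  qed
  show "X \<in> D" if X: "X \<in> Ob C" "ShO C X \<in> D" for X
  proof -
    have "(\<lambda>y. delta X y - (- delta (ShO C X) y)) \<in> RG" using sh_RG[OF X(1)] by (simp add: algebra_simps)
    moreover have "(\<lambda>y. - delta (ShO C X) y) \<in> Hp" using Hp_smult[of "delta (ShO C X)" "-1"] X unfolding D_def by simp
    ultimately show ?thesis by (rule inD[OF X(1)])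
  qed
  show "Z \<in> D" if t: "(X, Y, Z, f, g, h) \<in> Tri C" and XY: "X \<in> D" "Y \<in> D" for X Y Z f g h
  proof -
    have O: "Z \<in> Ob C" using tri_arr[OF t] by blast
    have "(\<lambda>y. delta Z y - (delta Y y + (-1) * delta X y)) \<in> RG"
      using qs_neg[OF relT_G[OF t]] by (simp add: algebra_simps)
    moreover have "(\<lambda>y. delta Y y + (-1) * delta X y) \<in> Hp"
      using Hp_lin[of "delta X" "delta Y" "-1"] XY unfolding D_def by (simp add: algebra_simps)
    ultimately show ?thesis by (rule inD[OF O])
  qed
  show "\<exists>V\<in>Ob C. \<exists>S. is_biproduct C U V S \<and> S \<in> D" if U: "U \<in> Ob C" for U
  proof -
    have b: "is_biproduct C U (ShO C U) (bpc U (ShO C U))" using bpc U by simp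
    show ?thesis using bpsh_D[OF b] b U by (intro bexI[of _ "ShO C U"]) auto
  qed
qed

lemma zero_lemma: "U \<in> Ob C \<Longrightarrow> is_biproduct C (ShO C U) U E \<Longrightarrow> delta E \<in> RD"
proof -
  assume U: "U \<in> Ob C" and E: "is_biproduct C (ShO C U) U E"
  let ?U1 = "ShO C U" and ?U2 = "ShO C (ShO C U)"
  have O: "?U1 \<in> Ob C" "?U2 \<in> Ob C" using U by auto
  obtain f' Q g' h' where t1: "(E, ?U1, Q, f', g', h') \<in> Tri C" and Q: "is_biproduct C ?U1 z0 Q"
    using op_first[OF id_tri[OF O(1)] E] by blast
  let ?S' = "bpc ?U1 ?U2"
  have S': "is_biproduct C ?U1 ?U2 ?S'" using bpc O by blast
  obtain f'' Q' g'' h'' where t2: "(E, ?S', Q', f'', g'', h'') \<in> Tri C" and Q': "is_biproduct C Q ?U2 Q'"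
    using op_mid[OF t1 S'] by blast
  have ED: "E \<in> D" using bpsh_D'[OF E] .
  have SD: "?S' \<in> D" using bpsh_D[OF S'] .
  have QU: "isomorphic C ?U1 Q" using bp_zero[OF Q z0] .
  have iso: "isomorphic C ?S' Q'" using bp_cong[OF QU iso_refl[OF O(2)] S' Q'] .
  have QD: "Q' \<in> D" using iso_D[OF SD iso] .
  have r1: "(\<lambda>y. delta ?S' y - delta E y - delta Q' y) \<in> RD" using relT[OF t2 ED SD QD] qs_base by blast
  have r2: "(\<lambda>y. delta ?S' y - delta Q' y) \<in> RD" using relI[OF iso SD QD] qs_base by blast
  from qs_diff[OF r2 r1] show ?thesis by simp
qed

definition Sig where
  "Sig = {\<sigma>. \<exists>A B S. is_biproduct C A B S \<and> \<sigma> = (\<lambda>y. delta A y + delta B y - delta S y)}"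

abbreviation Tg where "Tg \<equiv> qspan (groth_rels C D \<union> Sig)"

lemma sig_T: "is_biproduct C A B S \<Longrightarrow> (\<lambda>y. delta A y + delta B y - delta S y) \<in> Tg"
  unfolding Sig_def by (rule qs_base) blast

lemma RD_T: "v \<in> RD \<Longrightarrow> v \<in> Tg"
  using qs_mono[of "groth_rels C D" "groth_rels C D \<union> Sig"] by blast

lemma relD_T: "v \<in> groth_rels C D \<Longrightarrow> v \<in> Tg"
  by (rule qs_base) blast

lemma step1_tri: "(X, Y, Z, f, g, h) \<in> Tri C \<Longrightarrow> (\<lambda>y. delta Y y - delta X y - delta Z y) \<in> Tg"
proof -
  assume t: "(X, Y, Z, f, g, h) \<in> Tri C"
  note At = tri_arr[OF t]
  let ?X1 = "ShO C X" and ?X2 = "ShO C (ShO C X)"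
  let ?S1 = "bpc X ?X1"
  have S1: "is_biproduct C X ?X1 ?S1" using bpc At by simp
  obtain f1 Q g1 h1 where t1: "(?S1, Y, Q, f1, g1, h1) \<in> Tri C" and Q: "is_biproduct C ?X2 Z Q"
    using op_first[OF t S1] by blast
  have QO: "Q \<in> Ob C" using bp_ob Q by blast
  let ?Q1 = "ShO C Q"
  let ?S2 = "bpc Y ?Q1"
  have S2: "is_biproduct C Y ?Q1 ?S2" using bpc At QO by simp
  obtain f2 Q2 g2 h2 where t2: "(?S1, ?S2, Q2, f2, g2, h2) \<in> Tri C" and Q2: "is_biproduct C Q ?Q1 Q2"
    using op_mid[OF t1 S2] by blast
  let ?E = "bpc ?X2 ?X1"
  have E: "is_biproduct C ?X2 ?X1 ?E" using bpc At by simp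
  have dE: "delta ?E \<in> RD" using zero_lemma[OF ob_sh[of X] E] At by simp
  have S1D: "?S1 \<in> D" using bpsh_D[OF S1] .
  have Q2D: "Q2 \<in> D" using bpsh_D[OF Q2] .
  have S2D: "?S2 \<in> D"
  proof (rule inD)
    show "?S2 \<in> Ob C" using At QO by simp
    show "(\<lambda>y. delta ?S2 y - (delta ?S1 y + delta Q2 y)) \<in> RG" using relT_G[OF t2] by (simp add: algebra_simps)
    show "(\<lambda>y. delta ?S1 y + delta Q2 y) \<in> Hp" using Hp_add S1D Q2D unfolding D_def by blast
  qed
  have r2: "(\<lambda>y. delta ?S2 y - delta ?S1 y - delta Q2 y) \<in> Tg" using relD_T relT[OF t2 S1D S2D Q2D] by blast
  have a1: "(\<lambda>y. delta Y y + delta ?Q1 y - delta ?S2 y) \<in> Tg" using sig_T[OF S2] .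
  have a2: "(\<lambda>y. delta X y + delta ?X1 y - delta ?S1 y) \<in> Tg" using sig_T[OF S1] .
  have a3: "(\<lambda>y. delta Q y + delta ?Q1 y - delta Q2 y) \<in> Tg" using sig_T[OF Q2] .
  have a4: "(\<lambda>y. delta ?X2 y + delta Z y - delta Q y) \<in> Tg" using sig_T[OF Q] .
  have a5: "(\<lambda>y. delta ?X2 y + delta ?X1 y - delta ?E y) \<in> Tg" using sig_T[OF E] .
  have a6: "delta ?E \<in> Tg" using RD_T[OF dE] .
  have "(\<lambda>y. (delta ?S2 y - delta ?S1 y - delta Q2 y) + (delta Y y + delta ?Q1 y - delta ?S2 y)
      - (delta X y + delta ?X1 y - delta ?S1 y) - (delta Q y + delta ?Q1 y - delta Q2 y)
      - (delta ?X2 y + delta Z y - delta Q y) + (delta ?X2 y + delta ?X1 y - delta ?E y) + delta ?E y) \<in> Tg"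
    using qs_add[OF qs_add[OF qs_diff[OF qs_diff[OF qs_diff[OF qs_add[OF r2 a1] a2] a3] a4] a5] a6] .
  then show ?thesis by (simp add: algebra_simps)
qed

lemma step1_iso: "isomorphic C X X' \<Longrightarrow> (\<lambda>y. delta X y - delta X' y) \<in> Tg"
proof -
  assume i: "isomorphic C X X'"
  have O: "X \<in> Ob C" "X' \<in> Ob C" using iso_ob i by auto
  let ?X1 = "ShO C X"
  let ?E = "bpc X ?X1" and ?E' = "bpc X' ?X1"
  have E: "is_biproduct C X ?X1 ?E" and E': "is_biproduct C X' ?X1 ?E'" using bpc O by auto
  have ii: "isomorphic C ?E ?E'" using bp_cong[OF i iso_refl E E'] O by simp
  have ED: "?E \<in> D" using bpsh_D[OF E] .
  have E'D: "?E' \<in> D" using iso_D[OF ED ii] .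
  have r: "(\<lambda>y. delta ?E y - delta ?E' y) \<in> Tg" using relD_T relI[OF ii ED E'D] by blast
  have "(\<lambda>y. (delta ?E y - delta ?E' y) + (delta X y + delta ?X1 y - delta ?E y)
       - (delta X' y + delta ?X1 y - delta ?E' y)) \<in> Tg"
    using qs_diff[OF qs_add[OF r sig_T[OF E]] sig_T[OF E']] .
  then show ?thesis by (simp add: algebra_simps)
qed

lemma step1: "RG \<subseteq> Tg"
proof (rule qs_span)
  show "groth_rels C (Ob C) \<subseteq> Tg"
  proof
    fix r assume "r \<in> groth_rels C (Ob C)"
    then have "(\<exists>X Y Z f g h. r = (\<lambda>y. delta Y y - delta X y - delta Z y) \<and> (X, Y, Z, f, g, h) \<in> Tri C)
       \<or> (\<exists>X X'. r = (\<lambda>y. delta X y - delta X' y) \<and> isomorphic C X X')"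
      unfolding groth_rels_def by blast
    then show "r \<in> Tg" using step1_tri step1_iso by blast
  qed
qed

end

definition cnt where "cnt L y = (of_nat (count_list L y) :: rat)"

lemma cnt_app: "cnt (xs @ ys) y = cnt xs y + cnt ys y" unfolding cnt_def by simp
lemma cnt_cons: "cnt (x # xs) y = delta x y + cnt xs y" unfolding cnt_def delta_def by auto
lemma cnt_nil: "cnt [] y = 0" unfolding cnt_def by simp

context tri
begin

lemma cnt_rep: "cnt (rep k L) y = of_nat k * cnt L y" unfolding cnt_def by (simp add: rep_count)

end

lemma count_filter: "count_list (filter P xs) y = (if P y then count_list xs y else 0)"
  by (induct xs) auto

context mainloc
begin

lemma objG: "set L \<subseteq> Ob C \<Longrightarrow> (\<lambda>y. delta (obj L) y - cnt L y) \<in> RG"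
proof (induct L)
  case Nil then show ?case using z_RG by (simp add: cnt_nil)
next
  case (Cons x L)
  then have O: "x \<in> Ob C" "obj L \<in> Ob C" "set L \<subseteq> Ob C" by auto
  have "(\<lambda>y. (delta (bpc x (obj L)) y - delta x y - delta (obj L) y) + (delta (obj L) y - cnt L y)) \<in> RG"
    using qs_add[OF bp_RG[OF bpc[OF O(1,2)]] Cons(1)[OF O(3)]] .
  then show ?case by (simp add: cnt_cons algebra_simps)
qed

lemma objD: "set L \<subseteq> D \<Longrightarrow> obj L \<in> D \<and> (\<lambda>y. delta (obj L) y - cnt L y) \<in> RD"
proof (induct L)
  case Nil then show ?case using z_RD z0_D by (simp add: cnt_nil)
next
  case (Cons x L)
  then have XD: "x \<in> D" "obj L \<in> D" "(\<lambda>y. delta (obj L) y - cnt L y) \<in> RD" by auto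
  have O: "x \<in> Ob C" "obj L \<in> Ob C" using XD D_sub by auto
  have b: "bpc x (obj L) \<in> D" "(\<lambda>y. delta (bpc x (obj L)) y - delta x y - delta (obj L) y) \<in> groth_rels C D"
    using bp_D[OF XD(1,2) bpc[OF O]] by auto
  have "(\<lambda>y. (delta (bpc x (obj L)) y - delta x y - delta (obj L) y) + (delta (obj L) y - cnt L y)) \<in> RD"
    using qs_add[OF qs_base[OF b(2)] XD(3)] .
  then show ?case using b(1) by (simp add: cnt_cons algebra_simps)
qed

definition Inv where
  "Inv u \<longleftrightarrow> (\<exists>n::nat. n > 0 \<and> (\<exists>L1 L2. set L1 \<subseteq> Ob C \<and> set L2 \<subseteq> Ob C \<and>
      (\<forall>y. of_nat n * u y = cnt L1 y - cnt L2 y) \<and> isomorphic C (obj L1) (obj L2)))"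

lemma rat_clear: "\<exists>p::int. \<exists>q::nat. q > 0 \<and> of_nat q * c = (of_int p :: rat)"
proof -
  obtain p q where pq: "quotient_of c = (p, q)" by (cases "quotient_of c") auto
  have q: "q > 0" using quotient_of_denom_pos[OF pq] .
  have c: "c = of_int p / of_int q" using quotient_of_div[OF pq] .
  have "of_nat (nat q) * c = of_int p" using q c by simp
  then show ?thesis using q by (intro exI[of _ p] exI[of _ "nat q"]) auto
qed

lemma inv_step: "a \<in> Sig \<Longrightarrow> Inv u \<Longrightarrow> Inv (\<lambda>y. c * a y + u y)"
proof -
  assume a: "a \<in> Sig" and u: "Inv u"
  obtain A B S where b: "is_biproduct C A B S" and aeq: "a = (\<lambda>y. delta A y + delta B y - delta S y)"
    using a unfolding Sig_def by blast
  have O: "A \<in> Ob C" "B \<in> Ob C" "S \<in> Ob C" using bp_ob b by auto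
  obtain n L1 L2 where n: "n > 0" and L: "set L1 \<subseteq> Ob C" "set L2 \<subseteq> Ob C"
    and eq: "\<And>y. of_nat n * u y = cnt L1 y - cnt L2 y" and iso: "isomorphic C (obj L1) (obj L2)"
    using u unfolding Inv_def by blast
  obtain p q where q: "q > 0" and cq: "of_nat q * c = (of_int p :: rat)" using rat_clear by blast
  define k where "k = n * nat \<bar>p\<bar>"
  have nq: "n * q > 0" using n q by simp
  have main: "of_nat (n * q) * (c * a y + u y) = of_nat q * (cnt L1 y - cnt L2 y) + of_int p * of_nat n * a y" for y
  proof -
    have "of_nat (n * q) * (c * a y + u y) = (of_nat q * c) * of_nat n * a y + of_nat q * (of_nat n * u y)"
      by (simp add: algebra_simps)
    then show ?thesis using cq eq by simp
  qed
  have AB: "isomorphic C (obj [A, B]) (obj [S])" using obj_pair[OF b] .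
  have sets: "set (rep q L1) \<subseteq> Ob C" "set (rep q L2) \<subseteq> Ob C" "set (rep k [A, B]) \<subseteq> Ob C" "set (rep k [S]) \<subseteq> Ob C"
    using rep_set[of q L1] rep_set[of q L2] rep_set[of k "[A, B]"] rep_set[of k "[S]"] L O by auto
  have i1: "isomorphic C (obj (rep q L1)) (obj (rep q L2))" using rep_iso[OF L iso] .
  have i2: "isomorphic C (obj (rep k [A, B])) (obj (rep k [S]))" using rep_iso[OF _ _ AB] O by simp
  show ?thesis
  proof (cases "p \<ge> 0")
    case True
    have pk: "of_int p * of_nat n = (of_nat k :: rat)" unfolding k_def using True by simp
    have "\<forall>y. of_nat (n * q) * (c * a y + u y) = cnt (rep q L1 @ rep k [A, B]) y - cnt (rep q L2 @ rep k [S]) y"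
      using main pk by (simp add: cnt_app cnt_rep cnt_cons cnt_nil aeq algebra_simps)
    moreover have "isomorphic C (obj (rep q L1 @ rep k [A, B])) (obj (rep q L2 @ rep k [S]))"
      using obj_cong_app[OF sets(1,3,2,4) i1 i2] .
    ultimately show ?thesis unfolding Inv_def using nq sets
      by (intro exI[of _ "n * q"] conjI exI[of _ "rep q L1 @ rep k [A, B]"] exI[of _ "rep q L2 @ rep k [S]"]) auto
  next
    case False
    have pk: "of_int p * of_nat n = - (of_nat k :: rat)" unfolding k_def using False by simp
    have "\<forall>y. of_nat (n * q) * (c * a y + u y) = cnt (rep q L1 @ rep k [S]) y - cnt (rep q L2 @ rep k [A, B]) y"
      using main pk by (simp add: cnt_app cnt_rep cnt_cons cnt_nil aeq algebra_simps)
    moreover have "isomorphic C (obj (rep q L1 @ rep k [S])) (obj (rep q L2 @ rep k [A, B]))"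
      using obj_cong_app[OF sets(1,4,2,3) i1 iso_sym[OF i2]] .
    ultimately show ?thesis unfolding Inv_def using nq sets
      by (intro exI[of _ "n * q"] conjI exI[of _ "rep q L1 @ rep k [S]"] exI[of _ "rep q L2 @ rep k [A, B]"]) auto
  qed
qed

lemma inv_qspan: "u \<in> qspan Sig \<Longrightarrow> Inv u"
proof (induct rule: qs_induct)
  case base
  show ?case unfolding Inv_def
    by (rule exI[of _ 1], auto intro!: exI[of _ "[]"] simp: cnt_nil iso_refl)
next
  case (step c a u) then show ?case using inv_step by blast
qed

lemma cnt_filter: "cnt L y = cnt (filter P L) y + cnt (filter (\<lambda>x. \<not> P x) L) y"
  unfolding cnt_def by (simp add: count_filter)

lemma inv_D: "u \<in> fsupp D \<Longrightarrow> Inv u \<Longrightarrow> u \<in> RD"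
proof -
  assume uD: "u \<in> fsupp D" and u: "Inv u"
  obtain n L1 L2 where n: "n > 0" and L: "set L1 \<subseteq> Ob C" "set L2 \<subseteq> Ob C"
    and eq: "\<And>y. of_nat n * u y = cnt L1 y - cnt L2 y" and iso: "isomorphic C (obj L1) (obj L2)"
    using u unfolding Inv_def by blast
  define P where "P = filter (\<lambda>x. x \<in> D) L1"
  define K1 where "K1 = filter (\<lambda>x. x \<notin> D) L1"
  define Q where "Q = filter (\<lambda>x. x \<in> D) L2"
  define K2 where "K2 = filter (\<lambda>x. x \<notin> D) L2"
  have sets: "set P \<subseteq> D" "set Q \<subseteq> D" "set K1 \<subseteq> Ob C" "set K2 \<subseteq> Ob C" "set P \<subseteq> Ob C" "set Q \<subseteq> Ob C"
    unfolding P_def Q_def K1_def K2_def using L D_sub by auto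
  have c1: "cnt L1 y = cnt P y + cnt K1 y" for y unfolding P_def K1_def by (rule cnt_filter)
  have c2: "cnt L2 y = cnt Q y + cnt K2 y" for y unfolding Q_def K2_def by (rule cnt_filter)
  have kk: "count_list K1 y = count_list K2 y" for y
  proof (cases "y \<in> D")
    case True then show ?thesis unfolding K1_def K2_def by (simp add: count_filter)
  next
    case False
    then have "u y = 0" using uD unfolding fsupp_def by auto
    then have "cnt L1 y = cnt L2 y" using eq[of y] by simp
    then show ?thesis unfolding K1_def K2_def cnt_def using False by (simp add: count_filter)
  qed
  have ck: "cnt K1 y = cnt K2 y" for y unfolding cnt_def using kk by simp
  have eq2: "of_nat n * u y = cnt P y - cnt Q y" for y using eq[of y] c1[of y] c2[of y] ck[of y] by simp
  have cP: "count_list (P @ K1) y = count_list L1 y" for y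
    unfolding P_def K1_def by (simp add: count_filter)
  have cQ: "count_list (Q @ K1) y = count_list L2 y" for y
    using kk[of y] unfolding Q_def K2_def by (simp add: count_filter)
  have i1: "isomorphic C (obj (P @ K1)) (obj (Q @ K1))"
  proof -
    have "isomorphic C (obj (P @ K1)) (obj L1)" using obj_perm[of "P @ K1" L1] sets L cP by auto
    also have "isomorphic C (obj L1) (obj L2)" using iso .
    also have "isomorphic C (obj L2) (obj (Q @ K1))" using obj_perm[of L2 "Q @ K1"] sets L cQ by auto
    finally show ?thesis .
  qed
  define W where "W = obj K1"
  have WO: "W \<in> Ob C" unfolding W_def using sets by simp
  define F where "F = K1 @ [ShO C W]"
  have FO: "set F \<subseteq> Ob C" unfolding F_def using sets WO by auto
  have i2: "isomorphic C (obj (P @ F)) (obj (Q @ F))"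
    using obj_cong_app[OF _ _ _ _ i1 iso_refl[of "obj [ShO C W]"]] sets WO unfolding F_def by auto
  have FD: "obj F \<in> D"
  proof -
    have "isomorphic C (bpc W (ShO C W)) (bpc (obj K1) (obj [ShO C W]))"
      using bpc_cong[OF iso_refl[OF WO] bpc_zero_r[of "ShO C W"]] WO unfolding W_def by simp
    also have "isomorphic C (bpc (obj K1) (obj [ShO C W])) (obj F)"
      unfolding F_def using iso_sym[OF obj_app[of K1 "[ShO C W]"]] sets WO by auto
    finally show ?thesis using iso_D bpsh_D[OF bpc[of W "ShO C W"]] WO by auto
  qed
  obtain PD: "obj P \<in> D" and cPD: "(\<lambda>y. delta (obj P) y - cnt P y) \<in> RD" using objD[OF sets(1)] by blast
  obtain QD: "obj Q \<in> D" and cQD: "(\<lambda>y. delta (obj Q) y - cnt Q y) \<in> RD" using objD[OF sets(2)] by blast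
  let ?B1 = "bpc (obj P) (obj F)" and ?B2 = "bpc (obj Q) (obj F)"
  let ?X1 = "obj (P @ F)" and ?X2 = "obj (Q @ F)"
  have PO: "obj P \<in> Ob C" "obj Q \<in> Ob C" "obj F \<in> Ob C" using sets FO by auto
  obtain B1D: "?B1 \<in> D" and e1: "(\<lambda>y. delta ?B1 y - delta (obj P) y - delta (obj F) y) \<in> groth_rels C D"
    using bp_D[OF PD FD bpc[OF PO(1,3)]] by blast
  obtain B2D: "?B2 \<in> D" and e5: "(\<lambda>y. delta ?B2 y - delta (obj Q) y - delta (obj F) y) \<in> groth_rels C D"
    using bp_D[OF QD FD bpc[OF PO(2,3)]] by blast
  have j1: "isomorphic C ?B1 ?X1" using iso_sym[OF obj_app[of P F]] sets FO by auto
  have j2: "isomorphic C ?B2 ?X2" using iso_sym[OF obj_app[of Q F]] sets FO by auto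
  have X1D: "?X1 \<in> D" using iso_D[OF B1D j1] .
  have X2D: "?X2 \<in> D" using iso_D[OF B2D j2] .
  have e2: "(\<lambda>y. delta ?B1 y - delta ?X1 y) \<in> groth_rels C D" using relI[OF j1 B1D X1D] .
  have e4: "(\<lambda>y. delta ?B2 y - delta ?X2 y) \<in> groth_rels C D" using relI[OF j2 B2D X2D] .
  have e3: "(\<lambda>y. delta ?X1 y - delta ?X2 y) \<in> groth_rels C D" using relI[OF i2 X1D X2D] .
  have "(\<lambda>y. - (delta ?B1 y - delta (obj P) y - delta (obj F) y) + (delta ?B1 y - delta ?X1 y)
      + (delta ?X1 y - delta ?X2 y) - (delta ?B2 y - delta ?X2 y) + (delta ?B2 y - delta (obj Q) y - delta (obj F) y)
      - (delta (obj P) y - cnt P y) + (delta (obj Q) y - cnt Q y)) \<in> RD"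
    using qs_add[OF qs_diff[OF qs_add[OF qs_diff[OF qs_add[OF qs_add[OF qs_neg[OF qs_base[OF e1]] qs_base[OF e2]]
       qs_base[OF e3]] qs_base[OF e4]] qs_base[OF e5]] cPD] cQD] .
  then have "(\<lambda>y. cnt P y - cnt Q y) \<in> RD" by (simp add: algebra_simps)
  then have "(\<lambda>y. (1 / of_nat n) * (cnt P y - cnt Q y)) \<in> RD" by (rule qs_smult)
  moreover have "(\<lambda>y. (1 / of_nat n) * (cnt P y - cnt Q y)) = u"
  proof
    fix y show "(1 / of_nat n) * (cnt P y - cnt Q y) = u y" using eq2[of y] n by (simp add: field_simps)
  qed
  ultimately show ?thesis by simp
qed

lemma repr: "v \<in> fsupp (Ob C) \<Longrightarrow> \<exists>n::nat. n > 0 \<and> (\<exists>L1 L2. set L1 \<subseteq> Ob C \<and> set L2 \<subseteq> Ob C \<and>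
      (\<forall>y. of_nat n * v y = cnt L1 y - cnt L2 y))"
proof -
  assume v: "v \<in> fsupp (Ob C)"
  have "v \<in> qspan {delta x | x. x \<in> Ob C}" by (rule fsupp_in_qspan[OF v]) (auto intro: qs_base)
  then show ?thesis
  proof (induct rule: qs_induct)
    case base show ?case by (rule exI[of _ 1], auto intro!: exI[of _ "[]"] simp: cnt_nil)
  next
    case (step c a u)
    obtain x where x: "x \<in> Ob C" "a = delta x" using step(1) by blast
    obtain n L1 L2 where n: "n > 0" and L: "set L1 \<subseteq> Ob C" "set L2 \<subseteq> Ob C"
      and eq: "\<And>y. of_nat n * u y = cnt L1 y - cnt L2 y" using step(2) by blast
    obtain p q where q: "q > 0" and cq: "of_nat q * c = (of_int p :: rat)" using rat_clear by blast
    define k where "k = n * nat \<bar>p\<bar>"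
    have nq: "n * q > 0" using n q by simp
    have main: "of_nat (n * q) * (c * a y + u y) = of_nat q * (cnt L1 y - cnt L2 y) + of_int p * of_nat n * a y" for y
    proof -
      have "of_nat (n * q) * (c * a y + u y) = (of_nat q * c) * of_nat n * a y + of_nat q * (of_nat n * u y)"
        by (simp add: algebra_simps)
      then show ?thesis using cq eq by simp
    qed
    have sets: "set (rep q L1) \<subseteq> Ob C" "set (rep q L2) \<subseteq> Ob C" "set (rep k [x]) \<subseteq> Ob C"
      using rep_set[of q L1] rep_set[of q L2] rep_set[of k "[x]"] L x by auto
    show ?case
    proof (cases "p \<ge> 0")
      case True
      have pk: "of_int p * of_nat n = (of_nat k :: rat)" unfolding k_def using True by simp
      have "\<forall>y. of_nat (n * q) * (c * a y + u y) = cnt (rep q L1 @ rep k [x]) y - cnt (rep q L2) y"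
        using main pk x by (simp add: cnt_app cnt_rep cnt_cons cnt_nil algebra_simps)
      then show ?thesis using nq sets
        by (intro exI[of _ "n * q"] conjI exI[of _ "rep q L1 @ rep k [x]"] exI[of _ "rep q L2"]) auto
    next
      case False
      have pk: "of_int p * of_nat n = - (of_nat k :: rat)" unfolding k_def using False by simp
      have "\<forall>y. of_nat (n * q) * (c * a y + u y) = cnt (rep q L1) y - cnt (rep q L2 @ rep k [x]) y"
        using main pk x by (simp add: cnt_app cnt_rep cnt_cons cnt_nil algebra_simps)
      then show ?thesis using nq sets
        by (intro exI[of _ "n * q"] conjI exI[of _ "rep q L1"] exI[of _ "rep q L2 @ rep k [x]"]) auto
    qed
  qed
qed

lemma rep_D: "v \<in> Hp \<Longrightarrow> \<exists>w \<in> fsupp D. (\<lambda>y. w y - v y) \<in> RG"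
proof -
  assume vH: "v \<in> Hp"
  then have v: "v \<in> fsupp (Ob C)" unfolding Hp_def by auto
  obtain n L1 L2 where n: "n > 0" and L: "set L1 \<subseteq> Ob C" "set L2 \<subseteq> Ob C"
    and eq: "\<And>y. of_nat n * v y = cnt L1 y - cnt L2 y" using repr[OF v] by blast
  have O: "obj L1 \<in> Ob C" "obj L2 \<in> Ob C" using L by auto
  let ?Y = "bpc (obj L1) (ShO C (obj L2))"
  have YO: "?Y \<in> Ob C" using O by simp
  have "(\<lambda>y. (delta ?Y y - delta (obj L1) y - delta (ShO C (obj L2)) y) + (delta (obj L1) y - cnt L1 y)
      + (delta (obj L2) y + delta (ShO C (obj L2)) y) - (delta (obj L2) y - cnt L2 y)) \<in> RG"
    using qs_diff[OF qs_add[OF qs_add[OF bp_RG[OF bpc[OF O(1) ob_sh[OF O(2)]]] objG[OF L(1)]] sh_RG[OF O(2)]] objG[OF L(2)]] .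
  moreover have "(\<lambda>y. (delta ?Y y - delta (obj L1) y - delta (ShO C (obj L2)) y) + (delta (obj L1) y - cnt L1 y)
      + (delta (obj L2) y + delta (ShO C (obj L2)) y) - (delta (obj L2) y - cnt L2 y)) = (\<lambda>y. delta ?Y y - of_nat n * v y)"
  proof
    fix y show "(delta ?Y y - delta (obj L1) y - delta (ShO C (obj L2)) y) + (delta (obj L1) y - cnt L1 y)
      + (delta (obj L2) y + delta (ShO C (obj L2)) y) - (delta (obj L2) y - cnt L2 y) = delta ?Y y - of_nat n * v y"
      using eq[of y] by (simp add: algebra_simps)
  qed
  ultimately have r: "(\<lambda>y. delta ?Y y - of_nat n * v y) \<in> RG" by simp
  have "(\<lambda>y. of_nat n * v y) \<in> Hp" using Hp_smult[OF vH] .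
  then have YD: "?Y \<in> D" using inD[OF YO r] by blast
  define w where "w = (\<lambda>y. (1 / of_nat n) * delta ?Y y)"
  have "w \<in> fsupp D" unfolding w_def using fsupp_smult[OF delta_fsupp[OF YD]] .
  moreover have "(\<lambda>y. w y - v y) \<in> RG"
  proof -
    have "(\<lambda>y. (1 / of_nat n) * (delta ?Y y - of_nat n * v y)) \<in> RG" using qs_smult[OF r] .
    moreover have "(\<lambda>y. (1 / of_nat n) * (delta ?Y y - of_nat n * v y)) = (\<lambda>y. w y - v y)"
      unfolding w_def using n by (auto simp: field_simps)
    ultimately show ?thesis by simp
  qed
  ultimately show ?thesis by blast
qed

lemma img: "gq_incl C D ` GQ C D = H"
proof
  show "gq_incl C D ` GQ C D \<subseteq> H"
  proof
    fix K assume "K \<in> gq_incl C D ` GQ C D"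
    then obtain v where v: "v \<in> fsupp D" and K: "K = gq_incl C D (groth_coset C D v)" unfolding GQ_def by blast
    have K2: "K = groth_coset C (Ob C) v" using gq_incl_cos[OF D_sub v] K by simp
    have "v \<in> qspan Hp" by (rule fsupp_in_qspan[OF v]) (auto intro: qs_base simp: D_def)
    then have "v \<in> Hp" using Hp_qspan[of Hp] by blast
    then show "K \<in> H" using K2 unfolding Hp_def by simp
  qed
next
  show "H \<subseteq> gq_incl C D ` GQ C D"
  proof
    fix K assume KH: "K \<in> H"
    then have "K \<in> GQ C (Ob C)" using HS unfolding gq_subspace_def by blast
    then obtain v where v: "v \<in> fsupp (Ob C)" and K: "K = groth_coset C (Ob C) v" unfolding GQ_def by blast
    have vH: "v \<in> Hp" unfolding Hp_def using v K KH by simp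
    obtain w where w: "w \<in> fsupp D" and r: "(\<lambda>y. w y - v y) \<in> RG" using rep_D[OF vH] by blast
    have "gq_incl C D (groth_coset C D w) = groth_coset C (Ob C) w" using gq_incl_cos[OF D_sub w] .
    also have "\<dots> = K" unfolding K using cos_eq[OF r] .
    finally show "K \<in> gq_incl C D ` GQ C D" unfolding GQ_def using w by blast
  qed
qed

lemma inj: "inj_on (gq_incl C D) (GQ C D)"
proof (rule inj_onI)
  fix K1 K2 assume "K1 \<in> GQ C D" "K2 \<in> GQ C D" and e: "gq_incl C D K1 = gq_incl C D K2"
  then obtain v w where v: "v \<in> fsupp D" "K1 = groth_coset C D v" and w: "w \<in> fsupp D" "K2 = groth_coset C D w"
    unfolding GQ_def by blast
  have "groth_coset C (Ob C) v = groth_coset C (Ob C) w" using e gq_incl_cos[OF D_sub v(1)] gq_incl_cos[OF D_sub w(1)] v w by simp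
  then have "(\<lambda>y. v y - w y) \<in> RG" using cos_eqD fsupp_mono[OF D_sub] v(1) by blast
  then have "(\<lambda>y. v y - w y) \<in> Tg" using step1 by blast
  then obtain d s where d: "d \<in> RD" and s: "s \<in> qspan Sig" and vw: "(\<lambda>y. v y - w y) = (\<lambda>y. d y + s y)"
    using qs_Un by blast
  have sD: "s \<in> fsupp D"
  proof -
    have "(\<lambda>y. (v y - w y) - d y) \<in> fsupp D" using fsupp_diff[OF fsupp_diff[OF v(1) w(1)] R_fsupp[THEN subsetD, OF d]] .
    moreover have "(\<lambda>y. (v y - w y) - d y) = s" using vw by (auto simp: fun_eq_iff)
    ultimately show ?thesis by simp
  qed
  have "s \<in> RD" using inv_D[OF sD inv_qspan[OF s]] .
  then have "(\<lambda>y. v y - w y) \<in> RD" using qs_add[OF d] vw by simp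
  then show "K1 = K2" using v w cos_eq by blast
qed

end

theorem lemma3p3:
  fixes C :: "('o, 'm) tcat" and H :: "('o \<Rightarrow> rat) set set"
  assumes "triangulated C"
    and "gq_subspace C (Ob C) H"
  shows "\<exists>D. dense_subcategory C D \<and>
           inj_on (gq_incl C D) (GQ C D) \<and>
           gq_incl C D ` GQ C D = H"
proof -
  interpret mainloc C H
    by (rule mainloc.intro[OF tri.intro mainloc_axioms.intro]) (rule assms)+
  show ?thesis using dense inj img by blast
qed

end
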